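(* Let $0<\alpha<n$, $1<p<n/\alpha$, $1/q=1/p-\alpha/n$, $0<\kappa<p/q$, and let $w$ be a weight with $w^{q/p}\in A_1$ and $r_w>\frac{1-\kappa}{p/q-\kappa}$. Then there is $C$ such that $$\|M_w f\|_{L^{q,\kappa q/p}(w^{q/p},w)}\le C\|f\|_{L^{q,\kappa q/p}(w^{q/p},w)}.$$
   Context: All cubes have sides parallel to the axes. A weight is a locally integrable function positive a.e.; $u(Q)=\int_Q u$. $w\in A_1$ means $\frac1{|Q|}\int_Q w\le C\,\mathrm{ess\,inf}_Q w$ for all cubes $Q$. $w\in RH_r$ ($r>1$) means $\big(\frac1{|Q|}\int_Q w^r\big)^{1/r}\le C\frac1{|Q|}\int_Q w$ for all cubes; $r_w=\sup\{r>1:w\in RH_r\}$. The weighted maximal operator is $M_wf(x)=\sup_{Q\ni x}\frac1{w(Q)}\int_Q|f(y)|w(y)\,dy$. For $1\le p<\infty$, $0<\kappa<1$ and weights $u,v$, $\|f\|_{L^{p,\kappa}(u,v)}=\sup_Q\big(\frac1{v(Q)^\kappa}\int_Q|f|^pu\big)^{1/p}$. *)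

theory Defs
  imports "HOL-Analysis.Analysis"
begin

text \<open>Cubes with sides parallel to the axes (closed; boundaries are null sets).\<close>
definition is_cube :: "'a::euclidean_space set \<Rightarrow> bool" where
  "is_cube Q \<longleftrightarrow> (\<exists>a l. l > 0 \<and> Q = cbox a (a + l *\<^sub>R One))"

definition is_weight :: "('a::euclidean_space \<Rightarrow> real) \<Rightarrow> bool" where
  "is_weight w \<longleftrightarrow> w \<in> borel_measurable lebesgue \<and> (AE x in lebesgue. w x > 0) \<and>
     (\<forall>Q. is_cube Q \<longrightarrow> set_integrable lebesgue Q w)"

definition wmeas :: "('a::euclidean_space \<Rightarrow> real) \<Rightarrow> 'a set \<Rightarrow> real" where
  "wmeas u Q = (LINT x:Q|lebesgue. u x)"

text \<open>Muckenhoupt A_1: average over Q bounded by C times ess inf over Q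
  (written as the a.e. inequality on Q, which is what \<open>\<le> C ess inf\<close> means).\<close>
definition A1 :: "('a::euclidean_space \<Rightarrow> real) \<Rightarrow> bool" where
  "A1 w \<longleftrightarrow> is_weight w \<and> (\<exists>C. \<forall>Q. is_cube Q \<longrightarrow>
     (AE x in lebesgue. x \<in> Q \<longrightarrow> wmeas w Q / measure lebesgue Q \<le> C * w x))"

definition RH :: "real \<Rightarrow> ('a::euclidean_space \<Rightarrow> real) \<Rightarrow> bool" where
  "RH r w \<longleftrightarrow> (\<exists>C. \<forall>Q. is_cube Q \<longrightarrow>
     set_integrable lebesgue Q (\<lambda>x. w x powr r) \<and>
     ((LINT x:Q|lebesgue. w x powr r) / measure lebesgue Q) powr (1 / r)
        \<le> C * (wmeas w Q / measure lebesgue Q))"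

definition r_w :: "('a::euclidean_space \<Rightarrow> real) \<Rightarrow> ereal" where
  "r_w w = Sup (ereal ` {r. r > 1 \<and> RH r w})"

text \<open>Real powers of extended nonnegative reals (a > 0): \<infinity> ^ a = \<infinity>.\<close>
definition enn_powr :: "ennreal \<Rightarrow> real \<Rightarrow> ennreal" where
  "enn_powr x a = (if x = top then top else ennreal (enn2real x powr a))"

definition Mw :: "('a::euclidean_space \<Rightarrow> real) \<Rightarrow> ('a \<Rightarrow> real) \<Rightarrow> 'a \<Rightarrow> ennreal" where
  "Mw w f x = (SUP Q\<in>{Q. is_cube Q \<and> x \<in> Q}.
      (\<integral>\<^sup>+ y. ennreal (\<bar>f y\<bar> * w y) * indicator Q y \<partial>lebesgue) / ennreal (wmeas w Q))"

definition morrey_norm :: "real \<Rightarrow> real \<Rightarrow> ('a::euclidean_space \<Rightarrow> real) \<Rightarrow> ('a \<Rightarrow> real)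
    \<Rightarrow> ('a \<Rightarrow> ennreal) \<Rightarrow> ennreal" where
  "morrey_norm p \<kappa> u v g = (SUP Q\<in>{Q. is_cube Q}.
      enn_powr ((\<integral>\<^sup>+ x. enn_powr (g x) p * ennreal (u x) * indicator Q x \<partial>lebesgue)
                 / ennreal (wmeas v Q powr \<kappa>)) (1 / p))"

end

theory Submission
  imports Defs
begin


definition cube :: "'a::euclidean_space \<Rightarrow> real \<Rightarrow> 'a set" where
  "cube a l = cbox a (a + l *\<^sub>R One)"

lemma is_cube_iff: "is_cube Q \<longleftrightarrow> (\<exists>a l. l > 0 \<and> Q = cube a l)"
  by (simp add: is_cube_def cube_def)

lemma mem_cube: "x \<in> cube a l \<longleftrightarrow> (\<forall>i\<in>Basis. a \<bullet> i \<le> x \<bullet> i \<and> x \<bullet> i \<le> a \<bullet> i + l)"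
  by (simp add: cube_def mem_box inner_add_left)

lemma cube_sets[measurable]: "cube a l \<in> sets lebesgue"
  by (simp add: cube_def)

lemma measure_cube: "l \<ge> 0 \<Longrightarrow> measure lebesgue (cube a l) = l ^ DIM('a)"
  for a :: "'a::euclidean_space"
  by (simp add: cube_def measure_lborel_cbox_eq inner_add_left inner_diff_left prod_constant)

lemma emeasure_cube: "l \<ge> 0 \<Longrightarrow> emeasure lebesgue (cube a l) = ennreal (l ^ DIM('a))"
  for a :: "'a::euclidean_space"
  by (simp add: cube_def emeasure_lborel_cbox_eq inner_add_left inner_diff_left prod_constant)

lemma cube_tri:
  assumes "y \<in> cube a l" "y \<in> cube b m" "m \<le> l"
  shows "cube b m \<subseteq> cube (a - l *\<^sub>R One) (3 * l)"
  using assms unfolding mem_cube subset_iff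
  by (auto simp: inner_diff_left) (smt (verit, best))+

lemma cube_mono_sub:
  assumes "l \<ge> 0" shows "cube a l \<subseteq> cube (a - l *\<^sub>R One) (3 * l)"
  using assms unfolding mem_cube subset_iff by (auto simp: inner_diff_left)

lemma sigma_finite_lebesgue: "sigma_finite_measure (lebesgue :: 'a::euclidean_space measure)"
proof -
  obtain A :: "'a set set" where A: "countable A" "A \<subseteq> sets lborel" "\<Union>A = space lborel"
    "\<forall>a\<in>A. emeasure lborel a \<noteq> \<infinity>"
    using sigma_finite_measure.sigma_finite_countable[OF sigma_finite_lborel] by metis
  show ?thesis unfolding sigma_finite_measure_def
    apply (rule exI[of _ A]) using A by auto
qed


lemma young_tan:
  fixes f b s :: real
  assumes "f \<ge> 0" "b > 0" "s \<ge> 1"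
  shows "s * b powr (s - 1) * f \<le> f powr s + (s - 1) * b powr s"
proof (cases "s = 1")
  case True then show ?thesis using assms by simp
next
  case False
  then have s1: "s > 1" using assms by simp
  have q1: "s / (s - 1) > 1" using s1 by (simp add: field_simps)
  have conj: "1 / s + 1 / (s / (s - 1)) = 1" using s1 by (simp add: field_simps)
  have "f * b powr (s - 1) \<le> f powr s / s + (b powr (s - 1)) powr (s / (s - 1)) / (s / (s - 1))"
    using Youngs_inequality[OF s1 q1 conj] assms by simp
  also have "(b powr (s - 1)) powr (s / (s - 1)) = b powr s"
    using s1 assms by (simp add: powr_powr)
  finally have "f * b powr (s - 1) \<le> f powr s / s + b powr s * (s - 1) / s"
    using s1 by (simp add: field_simps)
  also have "f powr s / s + b powr s * (s - 1) / s = (f powr s + b powr s * (s - 1)) / s"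
    by (simp add: add_divide_distrib)
  finally have "f * b powr (s - 1) * s \<le> f powr s + b powr s * (s - 1)"
    using s1 by (simp add: pos_le_divide_eq)
  then show ?thesis by (simp add: algebra_simps)
qed

lemma le_one_plus_powr:
  fixes f s :: real assumes "f \<ge> 0" "s \<ge> 1"
  shows "f \<le> 1 + f powr s"
proof (cases "f \<le> 1")
  case True then show ?thesis using assms by (smt (verit) powr_ge_zero)
next
  case False
  then have "f powr 1 \<le> f powr s" using assms by (intro powr_mono) auto
  then show ?thesis using False by simp
qed

lemma jensen_enn:
  fixes f \<rho> :: "'a::euclidean_space \<Rightarrow> real"
  assumes s: "s \<ge> 1"
    and meas: "f \<in> borel_measurable lebesgue" "\<rho> \<in> borel_measurable lebesgue"
    and A: "A \<in> sets lebesgue"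
    and nn: "AE x in lebesgue. x \<in> A \<longrightarrow> 0 \<le> f x \<and> 0 \<le> \<rho> x"
    and R: "(\<integral>\<^sup>+ x. ennreal (\<rho> x) * indicator A x \<partial>lebesgue) = ennreal R" "R > 0"
  shows "enn_powr (\<integral>\<^sup>+ x. ennreal (f x * \<rho> x) * indicator A x \<partial>lebesgue) s
         \<le> ennreal (R powr (s - 1)) * (\<integral>\<^sup>+ x. ennreal (f x powr s * \<rho> x) * indicator A x \<partial>lebesgue)"
proof -
  define B where "B = (\<integral>\<^sup>+ x. ennreal (f x powr s * \<rho> x) * indicator A x \<partial>lebesgue)"
  define Fi where "Fi = (\<integral>\<^sup>+ x. ennreal (f x * \<rho> x) * indicator A x \<partial>lebesgue)"
  have Rp: "R powr (s - 1) > 0" using R by simp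
  show ?thesis
  proof (cases "B = top")
    case True
    then show ?thesis using Rp unfolding B_def[symmetric] Fi_def[symmetric]
      by (simp add: ennreal_mult_top)
  next
    case False
    then obtain Br where Br: "B = ennreal Br" "Br \<ge> 0" by (cases B) auto
    have "Fi \<le> (\<integral>\<^sup>+ x. ennreal (\<rho> x) * indicator A x + ennreal (f x powr s * \<rho> x) * indicator A x \<partial>lebesgue)"
      unfolding Fi_def
    proof (rule nn_integral_mono_AE)
      show "AE x in lebesgue. ennreal (f x * \<rho> x) * indicator A x
          \<le> ennreal (\<rho> x) * indicator A x + ennreal (f x powr s * \<rho> x) * indicator A x"
        using nn
      proof eventually_elim
        case (elim x)
        show ?case
        proof (cases "x \<in> A")
          case True
          then have "f x * \<rho> x \<le> (1 + f x powr s) * \<rho> x"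
            using elim le_one_plus_powr[of "f x" s] s by (intro mult_right_mono) auto
          then have "f x * \<rho> x \<le> \<rho> x + f x powr s * \<rho> x" by (simp add: algebra_simps)
          then show ?thesis using True elim
            by (simp add: ennreal_plus[symmetric] del: ennreal_plus)
        qed simp
      qed
    qed
    also have "\<dots> = ennreal R + B"
      unfolding B_def R(1)[symmetric] using meas A by (intro nn_integral_add) auto
    finally have Fle: "Fi \<le> ennreal R + B" .
    then have "Fi \<noteq> top" using Br by (auto simp: top_unique ennreal_plus[symmetric] simp del: ennreal_plus)
    then obtain F where F: "Fi = ennreal F" "F \<ge> 0" by (cases Fi) auto
    show ?thesis
    proof (cases "F = 0")
      case True
      then show ?thesis unfolding Fi_def[symmetric] F using s by (simp add: enn_powr_def)
    next
      case False
      define b where "b = F / R"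
      have bpos: "b > 0" using F False R by (simp add: b_def)
      have Fb: "F = b * R" using R by (simp add: b_def)
      have "ennreal (s * b powr (s - 1)) * Fi
          = (\<integral>\<^sup>+ x. ennreal (s * b powr (s - 1)) * (ennreal (f x * \<rho> x) * indicator A x) \<partial>lebesgue)"
        unfolding Fi_def using meas A by (intro nn_integral_cmult[symmetric]) auto
      also have "\<dots> \<le> (\<integral>\<^sup>+ x. ennreal (f x powr s * \<rho> x) * indicator A x
                 + ennreal ((s - 1) * b powr s) * (ennreal (\<rho> x) * indicator A x) \<partial>lebesgue)"
      proof (rule nn_integral_mono_AE)
        show "AE x in lebesgue. ennreal (s * b powr (s - 1)) * (ennreal (f x * \<rho> x) * indicator A x)
          \<le> ennreal (f x powr s * \<rho> x) * indicator A x + ennreal ((s - 1) * b powr s) * (ennreal (\<rho> x) * indicator A x)"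
          using nn
        proof eventually_elim
          case (elim x)
          show ?case
          proof (cases "x \<in> A")
            case True
            have "s * b powr (s - 1) * f x * \<rho> x \<le> (f x powr s + (s - 1) * b powr s) * \<rho> x"
              using young_tan[of "f x" b s] elim True bpos s by (intro mult_right_mono) auto
            then have "s * b powr (s - 1) * (f x * \<rho> x) \<le> f x powr s * \<rho> x + (s - 1) * b powr s * \<rho> x"
              by (simp add: algebra_simps)
            then show ?thesis using True elim s bpos
              by (simp add: ennreal_plus[symmetric] ennreal_mult[symmetric] del: ennreal_plus)
          qed simp
        qed
      qed
      also have "\<dots> = B + ennreal ((s - 1) * b powr s) * ennreal R"
        unfolding B_def R(1)[symmetric] using meas A
        by (subst nn_integral_add) (auto simp: nn_integral_cmult)
      finally have ineq: "ennreal (s * b powr (s - 1)) * ennreal F \<le> ennreal Br + ennreal ((s - 1) * b powr s) * ennreal R"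
        using F Br by simp
      have "s * b powr (s - 1) * F \<le> Br + (s - 1) * b powr s * R"
        using ineq s bpos R F Br
        by (simp add: ennreal_mult[symmetric] ennreal_plus[symmetric] del: ennreal_plus)
      moreover have "b powr (s - 1) * F = b powr s * R"
        using Fb bpos by (simp add: powr_diff field_simps)
      ultimately have key: "b powr s * R \<le> Br"
        by (simp add: algebra_simps) (smt (verit, ccfv_SIG) mult.assoc mult.commute)
      have "F powr s = R powr (s - 1) * (b powr s * R)"
        using Fb bpos R by (simp add: powr_mult powr_diff field_simps)
      also have "\<dots> \<le> R powr (s - 1) * Br" using key Rp by (intro mult_left_mono) auto
      finally show ?thesis unfolding Fi_def[symmetric] B_def[symmetric] F Br
        using Rp Br F(2) by (simp add: enn_powr_def ennreal_mult[symmetric])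
    qed
  qed
qed


lemma ae_exists:
  fixes Q :: "'a::euclidean_space set"
  assumes "AE x in lebesgue. x \<in> Q \<longrightarrow> P x" "Q \<in> sets lebesgue" "emeasure lebesgue Q \<noteq> 0"
  shows "\<exists>x\<in>Q. P x"
proof (rule ccontr)
  assume "\<not> ?thesis"
  then have "AE x in lebesgue. x \<notin> Q" using assms(1) by (auto elim: eventually_mono)
  then have "emeasure lebesgue Q = 0"
    using AE_iff_measurable[OF assms(2), of "\<lambda>x. x \<notin> Q"] by auto
  then show False using assms(3) by simp
qed

lemma weight_int:
  fixes u :: "'a::euclidean_space \<Rightarrow> real"
  assumes u: "is_weight u" and l: "l > 0"
  shows "(\<integral>\<^sup>+ x. ennreal (u x) * indicator (cube a l) x \<partial>lebesgue) = ennreal (wmeas u (cube a l))"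
    and "wmeas u (cube a l) > 0"
proof -
  have int: "set_integrable lebesgue (cube a l) u"
    using u l unfolding is_weight_def is_cube_iff by blast
  have meas: "u \<in> borel_measurable lebesgue" using u by (simp add: is_weight_def)
  have aepos: "AE x in lebesgue. 0 < u x" using u by (simp add: is_weight_def)
  have eq: "(\<integral>\<^sup>+ x. ennreal (u x) * indicator (cube a l) x \<partial>lebesgue)
      = (\<integral>\<^sup>+ x. ennreal (indicator (cube a l) x *\<^sub>R u x) \<partial>lebesgue)"
    by (intro nn_integral_cong) (auto simp: indicator_def)
  also have "\<dots> = ennreal (integral\<^sup>L lebesgue (\<lambda>x. indicator (cube a l) x *\<^sub>R u x))"
    using int aepos unfolding set_integrable_def
    by (intro nn_integral_eq_integral) (auto elim!: eventually_mono simp: indicator_def)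
  finally show I: "(\<integral>\<^sup>+ x. ennreal (u x) * indicator (cube a l) x \<partial>lebesgue) = ennreal (wmeas u (cube a l))"
    by (simp add: wmeas_def set_lebesgue_integral_def)
  have ge: "wmeas u (cube a l) \<ge> 0"
    unfolding wmeas_def set_lebesgue_integral_def
    by (rule integral_nonneg_AE) (use aepos in \<open>auto elim!: eventually_mono simp: indicator_def\<close>)
  show "wmeas u (cube a l) > 0"
  proof (rule ccontr)
    assume "\<not> ?thesis"
    then have "wmeas u (cube a l) = 0" using ge by simp
    then have "(\<integral>\<^sup>+ x. ennreal (u x) * indicator (cube a l) x \<partial>lebesgue) = 0" using I by simp
    then have "AE x in lebesgue. ennreal (u x) * indicator (cube a l) x = 0"
      using meas by (subst (asm) nn_integral_0_iff_AE) auto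
    then have "AE x in lebesgue. x \<in> cube a l \<longrightarrow> False"
      using aepos by eventually_elim (auto simp: indicator_def)
    then have "\<exists>x\<in>cube a l. False"
      using l by (intro ae_exists) (auto simp del: emeasure_completion simp: emeasure_cube)
    then show False by simp
  qed
qed

lemma nn_integral_const_indicator_cube:
  "l \<ge> 0 \<Longrightarrow> (\<integral>\<^sup>+ x. ennreal c * indicator (cube a l) x \<partial>lebesgue) = ennreal (c * l ^ DIM('a))"
  for a :: "'a::euclidean_space"
  by (cases "c \<ge> 0") (auto simp del: emeasure_completion simp: nn_integral_cmult_indicator emeasure_cube ennreal_mult ennreal_neg ennreal_eq_0_iff intro!: mult_nonpos_nonneg)

lemma integrate_lower:
  fixes u :: "'a::euclidean_space \<Rightarrow> real"
  assumes u: "is_weight u" and l: "l > 0"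
    and ae: "AE y in lebesgue. y \<in> cube a l \<longrightarrow> c \<le> u y"
  shows "c * l ^ DIM('a) \<le> wmeas u (cube a l)"
proof -
  have "ennreal (c * l ^ DIM('a)) = (\<integral>\<^sup>+ x. ennreal c * indicator (cube a l) x \<partial>lebesgue)"
    using l by (simp add: nn_integral_const_indicator_cube)
  also have "\<dots> \<le> (\<integral>\<^sup>+ x. ennreal (u x) * indicator (cube a l) x \<partial>lebesgue)"
    by (rule nn_integral_mono_AE) (use ae in \<open>auto elim!: eventually_mono simp: indicator_def ennreal_leI\<close>)
  also have "\<dots> = ennreal (wmeas u (cube a l))" using weight_int[OF u l] by simp
  finally show ?thesis using weight_int(2)[OF u l, of a]
    by (simp add: ennreal_le_iff)
qed


lemma wmeas_mono:
  fixes u :: "'a::euclidean_space \<Rightarrow> real"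
  assumes u: "is_weight u" "l > 0" "m > 0" "cube a l \<subseteq> cube b m"
  shows "wmeas u (cube a l) \<le> wmeas u (cube b m)"
proof -
  have "ennreal (wmeas u (cube a l)) \<le> ennreal (wmeas u (cube b m))"
    unfolding weight_int(1)[OF u(1,2), symmetric] weight_int(1)[OF u(1,3), symmetric]
    using u(4) by (intro nn_integral_mono) (auto simp: indicator_def)
  then show ?thesis using weight_int(2)[OF u(1,3), of b] by (simp add: ennreal_le_iff)
qed

locale wctx =
  fixes w :: "'a::euclidean_space \<Rightarrow> real" and s C1 :: real
  assumes weight: "is_weight w" and s1: "s > 1"
    and vweight: "is_weight (\<lambda>x. w x powr s)"
    and A1v: "\<And>Q. is_cube Q \<Longrightarrow> AE x in lebesgue. x \<in> Q \<longrightarrow>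
        wmeas (\<lambda>x. w x powr s) Q / measure lebesgue Q \<le> C1 * w x powr s"
begin

abbreviation "v \<equiv> (\<lambda>x. w x powr s)"

lemma aepos: "AE x in lebesgue. 0 < w x" using weight by (simp add: is_weight_def)
lemma wmeas_borel[measurable]: "w \<in> borel_measurable lebesgue" using weight by (simp add: is_weight_def)

lemma A1v_cube: "l > 0 \<Longrightarrow> AE x in lebesgue. x \<in> cube a l \<longrightarrow>
        wmeas v (cube a l) / l ^ DIM('a) \<le> C1 * w x powr s"
  using A1v[of "cube a l"] by (auto simp: is_cube_iff measure_cube)

lemma C1pos: "C1 > 0"
proof -
  define a :: 'a where "a = 0"
  have ae: "AE x in lebesgue. x \<in> cube a 1 \<longrightarrow> wmeas v (cube a 1) / 1 ^ DIM('a) \<le> C1 * w x powr s \<and> 0 < w x"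
    using A1v_cube[of 1 a, simplified] aepos by eventually_elim auto
  have "\<exists>x\<in>cube a 1. wmeas v (cube a 1) / 1 ^ DIM('a) \<le> C1 * w x powr s \<and> 0 < w x"
    by (rule ae_exists[OF ae cube_sets]) (simp del: emeasure_completion add: emeasure_cube)
  then obtain x where x: "wmeas v (cube a 1) / 1 ^ DIM('a) \<le> C1 * w x powr s" "0 < w x" by auto
  have "0 < wmeas v (cube a 1)" using weight_int(2)[OF vweight, of 1 a] by simp
  with x have "0 < C1 * w x powr s" by simp
  then show ?thesis using x(2) by (simp add: zero_less_mult_iff)
qed

lemma wlow:
  assumes l: "l > 0"
  shows "AE y in lebesgue. y \<in> cube a l \<longrightarrow>
     (wmeas v (cube a l) / (C1 * l ^ DIM('a))) powr (1 / s) \<le> w y"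
  using A1v_cube[OF l, of a] aepos
proof eventually_elim
  case (elim y)
  show ?case
  proof
    assume y: "y \<in> cube a l"
    have V0: "0 \<le> wmeas v (cube a l)" using weight_int(2)[OF vweight l, of a] by simp
    have "wmeas v (cube a l) / (C1 * l ^ DIM('a)) \<le> w y powr s"
      using elim y C1pos l by (simp add: divide_le_eq field_simps)
    then have "(wmeas v (cube a l) / (C1 * l ^ DIM('a))) powr (1 / s) \<le> (w y powr s) powr (1 / s)"
      using V0 C1pos l s1 by (intro powr_mono2) auto
    also have "\<dots> = w y" using elim s1 by (simp add: powr_powr)
    finally show "(wmeas v (cube a l) / (C1 * l ^ DIM('a))) powr (1 / s) \<le> w y" .
  qed
qed

lemma wint_low:
  assumes l: "l > 0"
  shows "(wmeas v (cube a l) / (C1 * l ^ DIM('a))) powr (1 / s) * l ^ DIM('a) \<le> wmeas w (cube a l)"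
  by (rule integrate_lower[OF weight l wlow[OF l]])

lemma jensen_cube:
  assumes l: "l > 0"
  shows "wmeas w (cube a l) powr s \<le> (l ^ DIM('a)) powr (s - 1) * wmeas v (cube a l)"
proof -
  have J: "enn_powr (\<integral>\<^sup>+ x. ennreal (w x * 1) * indicator (cube a l) x \<partial>lebesgue) s
         \<le> ennreal ((l ^ DIM('a)) powr (s - 1)) * (\<integral>\<^sup>+ x. ennreal (w x powr s * 1) * indicator (cube a l) x \<partial>lebesgue)"
    using s1 aepos l
    by (intro jensen_enn) (auto elim!: eventually_mono simp: nn_integral_const_indicator_cube[of l 1, simplified])
  have W: "(\<integral>\<^sup>+ x. ennreal (w x * 1) * indicator (cube a l) x \<partial>lebesgue) = ennreal (wmeas w (cube a l))"
    using weight_int(1)[OF weight l] by simp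
  have V: "(\<integral>\<^sup>+ x. ennreal (w x powr s * 1) * indicator (cube a l) x \<partial>lebesgue) = ennreal (wmeas v (cube a l))"
    using weight_int(1)[OF vweight l] by simp
  have W0: "wmeas w (cube a l) > 0" "wmeas v (cube a l) > 0"
    using weight_int(2)[OF weight l] weight_int(2)[OF vweight l] by auto
  from J show ?thesis unfolding W V using W0
    by (simp add: enn_powr_def ennreal_mult[symmetric])
qed

lemma hlow:
  assumes l: "l > 0"
  shows "AE y in lebesgue. y \<in> cube a l \<longrightarrow>
     wmeas v (cube a l) / wmeas w (cube a l) \<le> C1 * w y powr (s - 1)"
  using wlow[OF l, of a] aepos
proof eventually_elim
  case (elim y)
  show ?case
  proof
    assume y: "y \<in> cube a l"
    define V where "V = wmeas v (cube a l)"
    define W where "W = wmeas w (cube a l)"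
    define L where "L = l ^ DIM('a)"
    define m where "m = V / (C1 * L)"
    define t where "t = m powr (1 / s)"
    have Lp: "L > 0" using l by (simp add: L_def)
    have Vp: "V > 0" using weight_int(2)[OF vweight l] by (simp add: V_def)
    have mp: "m > 0" using Vp Lp C1pos by (simp add: m_def)
    have tp: "t > 0" using mp by (simp add: t_def)
    have ty: "t \<le> w y" using elim y by (simp add: t_def m_def V_def L_def)
    have tW: "t * L \<le> W" using wint_low[OF l, of a] by (simp add: t_def m_def V_def L_def W_def)
    have ts: "t powr s = m" using mp s1 by (simp add: t_def powr_powr)
    have "V / W \<le> V / (t * L)"
      using tW Vp tp Lp by (intro divide_left_mono) (auto intro: mult_pos_pos order.strict_trans2)
    also have "V / (t * L) = C1 * (m / t)" using Lp C1pos tp by (simp add: m_def field_simps)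
    also have "m / t = t powr (s - 1)" using tp ts by (simp add: powr_diff)
    also have "C1 * t powr (s - 1) \<le> C1 * w y powr (s - 1)"
      using ty tp s1 C1pos by (intro mult_left_mono powr_mono2) auto
    finally show "wmeas v (cube a l) / wmeas w (cube a l) \<le> C1 * w y powr (s - 1)"
      by (simp add: V_def W_def)
  qed
qed

lemma A1w:
  assumes l: "l > 0"
  shows "AE y in lebesgue. y \<in> cube a l \<longrightarrow>
     wmeas w (cube a l) / l ^ DIM('a) \<le> C1 powr (1 / s) * w y"
  using A1v_cube[OF l, of a] aepos
proof eventually_elim
  case (elim y)
  show ?case
  proof
    assume y: "y \<in> cube a l"
    define V where "V = wmeas v (cube a l)"
    define W where "W = wmeas w (cube a l)"
    define L where "L = l ^ DIM('a)"
    have Lp: "L > 0" using l by (simp add: L_def)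
    have Wp: "W > 0" using weight_int(2)[OF weight l] by (simp add: W_def)
    have J: "W powr s \<le> L powr (s - 1) * V" using jensen_cube[OF l, of a] by (simp add: W_def V_def L_def)
    have "(W / L) powr s = W powr s / L powr s" using Wp Lp by (simp add: powr_divide)
    also have "\<dots> \<le> L powr (s - 1) * V / L powr s" using J Lp by (intro divide_right_mono) auto
    also have "\<dots> = V / L" using Lp by (simp add: powr_diff field_simps)
    also have "\<dots> \<le> C1 * w y powr s" using elim y by (simp add: V_def L_def)
    finally have "(W / L) powr s \<le> C1 * w y powr s" .
    then have "((W / L) powr s) powr (1 / s) \<le> (C1 * w y powr s) powr (1 / s)"
      using Wp Lp s1 by (intro powr_mono2) auto
    also have "(C1 * w y powr s) powr (1 / s) = C1 powr (1 / s) * w y"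
      using C1pos elim s1 by (simp add: powr_mult powr_powr)
    also have "((W / L) powr s) powr (1 / s) = W / L"
      using Wp Lp s1 by (simp add: powr_powr)
    finally show "wmeas w (cube a l) / l ^ DIM('a) \<le> C1 powr (1 / s) * w y"
      by (simp add: W_def L_def)
  qed
qed

lemma doubling:
  assumes l: "l > 0" and m: "m > 0" and sub: "cube a l \<subseteq> cube b m"
  shows "wmeas w (cube b m) * l ^ DIM('a) \<le> C1 powr (1 / s) * m ^ DIM('a) * wmeas w (cube a l)"
proof -
  define c where "c = wmeas w (cube b m) / m ^ DIM('a) / C1 powr (1 / s)"
  have Cp: "C1 powr (1 / s) > 0" using C1pos by simp
  have "AE y in lebesgue. y \<in> cube a l \<longrightarrow> c \<le> w y"
    using A1w[OF m, of b]
  proof eventually_elim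
    case (elim y)
    show ?case
    proof
      assume "y \<in> cube a l"
      then have "wmeas w (cube b m) / m ^ DIM('a) \<le> C1 powr (1 / s) * w y" using elim sub by auto
      then have "wmeas w (cube b m) / m ^ DIM('a) / C1 powr (1 / s) \<le> w y"
        using Cp by (subst pos_divide_le_eq) (auto simp: mult.commute)
      then show "c \<le> w y" unfolding c_def .
    qed
  qed
  then have "c * l ^ DIM('a) \<le> wmeas w (cube a l)" by (rule integrate_lower[OF weight l])
  then show ?thesis using Cp m by (simp add: c_def field_simps)
qed

end


definition avgI :: "('a::euclidean_space \<Rightarrow> real) \<Rightarrow> ('a \<Rightarrow> real) \<Rightarrow> 'a set \<Rightarrow> ennreal" where
  "avgI w g Q = (\<integral>\<^sup>+ y. ennreal (\<bar>g y\<bar> * w y) * indicator Q y \<partial>lebesgue)"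

lemma Mw_alt: "Mw w g x = (SUP Q\<in>{Q. is_cube Q \<and> x \<in> Q}. avgI w g Q / ennreal (wmeas w Q))"
  by (simp add: Mw_def avgI_def)

lemma Mw_ge: "l > 0 \<Longrightarrow> x \<in> cube a l \<Longrightarrow> avgI w g (cube a l) / ennreal (wmeas w (cube a l)) \<le> Mw w g x"
  unfolding Mw_alt by (rule SUP_upper) (auto simp: is_cube_iff)

lemma Mw_le: "(\<And>a l. l > 0 \<Longrightarrow> x \<in> cube a l \<Longrightarrow> avgI w g (cube a l) / ennreal (wmeas w (cube a l)) \<le> B)
   \<Longrightarrow> Mw w g x \<le> B"
  unfolding Mw_alt by (rule SUP_least) (auto simp: is_cube_iff)

lemma avgI_mono: "Q \<subseteq> Q' \<Longrightarrow> avgI w g Q \<le> avgI w g Q'"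
  unfolding avgI_def by (intro nn_integral_mono) (auto simp: indicator_def)

lemma cube_in_box:
  fixes a :: "'a::euclidean_space"
  assumes "x \<in> cube a l" "e > 0"
  shows "x \<in> box (a - e *\<^sub>R One) ((a - e *\<^sub>R One) + (l + 2 * e) *\<^sub>R One)"
  using assms by (auto simp: mem_cube mem_box inner_diff_left inner_add_left)

lemma cube_sub_enl:
  fixes a :: "'a::euclidean_space"
  assumes "e \<ge> 0" shows "cube a l \<subseteq> cube (a - e *\<^sub>R One) (l + 2 * e)"
proof
  fix x assume x: "x \<in> cube a l"
  have "(a - e *\<^sub>R One) \<bullet> i \<le> x \<bullet> i \<and> x \<bullet> i \<le> (a - e *\<^sub>R One) \<bullet> i + (l + 2 * e)" if i: "i \<in> Basis" for i
  proof -
    have "a \<bullet> i \<le> x \<bullet> i \<and> x \<bullet> i \<le> a \<bullet> i + l" using x i unfolding mem_cube by blast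
    then show ?thesis using i assms by (simp add: inner_diff_left)
  qed
  then show "x \<in> cube (a - e *\<^sub>R One) (l + 2 * e)" unfolding mem_cube by blast
qed

lemma box_sub_cube: "box a (a + l *\<^sub>R One) \<subseteq> cube a l"
  by (simp add: cube_def box_subset_cbox)

lemma Inter_cubes:
  fixes a :: "'a::euclidean_space"
  shows "(\<Inter>k. cube (a - (1 / Suc k) *\<^sub>R One) (l + 2 * (1 / Suc k))) = cube a l"
proof (intro equalityI subsetI)
  fix x assume x: "x \<in> (\<Inter>k. cube (a - (1 / Suc k) *\<^sub>R One) (l + 2 * (1 / Suc k)))"
  have h: "a \<bullet> i - 1 / Suc k \<le> x \<bullet> i \<and> x \<bullet> i \<le> a \<bullet> i + l + 1 / Suc k" if i: "i \<in> Basis" for i k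
  proof -
    have "x \<in> cube (a - (1 / Suc k) *\<^sub>R One) (l + 2 * (1 / Suc k))" using x by blast
    then have "(a - (1 / Suc k) *\<^sub>R One) \<bullet> i \<le> x \<bullet> i \<and> x \<bullet> i \<le> (a - (1 / Suc k) *\<^sub>R One) \<bullet> i + (l + 2 * (1 / Suc k))"
      using i unfolding mem_cube by blast
    then show ?thesis using i by (simp add: inner_diff_left)
  qed
  have "a \<bullet> i \<le> x \<bullet> i \<and> x \<bullet> i \<le> a \<bullet> i + l" if i: "i \<in> Basis" for i
  proof -
    have "a \<bullet> i \<le> x \<bullet> i + e" if ep: "e > 0" for e
    proof -
      obtain k where "1 / Suc k < e" using ep by (metis nat_approx_posE)
      then show ?thesis using h[OF i, of k] by linarith
    qed
    moreover have "x \<bullet> i \<le> a \<bullet> i + l + e" if ep: "e > 0" for e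
    proof -
      obtain k where "1 / Suc k < e" using ep by (metis nat_approx_posE)
      then show ?thesis using h[OF i, of k] by linarith
    qed
    ultimately show ?thesis by (meson field_le_epsilon)
  qed
  then show "x \<in> cube a l" by (simp add: mem_cube)
next
  fix x assume "x \<in> cube a l"
  then show "x \<in> (\<Inter>k. cube (a - (1 / Suc k) *\<^sub>R One) (l + 2 * (1 / Suc k)))"
    by (auto simp: mem_cube inner_diff_left) (smt (verit, del_insts) of_nat_0_le_iff divide_nonneg_nonneg)+
qed

context wctx begin

lemma enlarge:
  assumes l: "l > 0" and x: "x \<in> cube a l" and c: "c < avgI w g (cube a l) / ennreal (wmeas w (cube a l))"
  shows "\<exists>a' l'. l' > 0 \<and> x \<in> box a' (a' + l' *\<^sub>R One) \<and> c < avgI w g (cube a' l') / ennreal (wmeas w (cube a' l'))"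
proof -
  define e :: "nat \<Rightarrow> real" where "e k = 1 / Suc k" for k
  define A where "A k = cube (a - e k *\<^sub>R One) (l + 2 * e k)" for k
  have ep: "e k > 0" for k by (simp add: e_def)
  have lk: "l + 2 * e k > 0" for k using l ep[of k] by simp
  have xb: "x \<in> box (a - e k *\<^sub>R One) ((a - e k *\<^sub>R One) + (l + 2 * e k) *\<^sub>R One)" for k
    using cube_in_box[OF x ep] .
  have sub: "cube a l \<subseteq> A k" for k
    unfolding A_def using ep[of k] by (intro cube_sub_enl) simp
  have dec: "decseq A"
  proof (rule decseq_SucI)
    fix k
    have le: "e (Suc k) \<le> e k" by (simp add: e_def frac_le)
    have "A (Suc k) = cube ((a - e k *\<^sub>R One) + (e k - e (Suc k)) *\<^sub>R One) ((l + 2 * e k) - 2 * (e k - e (Suc k)))"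
      unfolding A_def by (simp add: algebra_simps)
    also have "\<dots> \<subseteq> A k"
    proof -
      have "cube ((a - e k *\<^sub>R One) + (e k - e (Suc k)) *\<^sub>R One) ((l + 2 * e k) - 2 * (e k - e (Suc k)))
        \<subseteq> cube (((a - e k *\<^sub>R One) + (e k - e (Suc k)) *\<^sub>R One) - (e k - e (Suc k)) *\<^sub>R One)
                 (((l + 2 * e k) - 2 * (e k - e (Suc k))) + 2 * (e k - e (Suc k)))"
        using le by (intro cube_sub_enl) simp
      then show ?thesis unfolding A_def by simp
    qed
    finally show "A (Suc k) \<subseteq> A k" .
  qed
  define M where "M = density lebesgue (\<lambda>x. ennreal (w x))"
  have emA: "emeasure M (A k) = ennreal (wmeas w (A k))" for k
    unfolding M_def A_def by (subst emeasure_density) (auto simp: weight_int(1)[OF weight lk])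
  have emQ: "emeasure M (cube a l) = ennreal (wmeas w (cube a l))"
    unfolding M_def by (subst emeasure_density) (auto simp: weight_int(1)[OF weight l])
  have "(\<lambda>k. emeasure M (A k)) \<longlonglongrightarrow> emeasure M (\<Inter>k. A k)"
  proof (rule Lim_emeasure_decseq)
    show "range A \<subseteq> sets M" by (auto simp: M_def A_def)
    show "decseq A" by (rule dec)
    show "emeasure M (A i) \<noteq> \<infinity>" for i using emA[of i] by simp
  qed
  moreover have "(\<Inter>k. A k) = cube a l" unfolding A_def e_def by (rule Inter_cubes)
  ultimately have "(\<lambda>k. ennreal (wmeas w (A k))) \<longlonglongrightarrow> ennreal (wmeas w (cube a l))"
    using emA emQ by simp
  moreover have Wp: "wmeas w (A k) > 0" for k unfolding A_def using weight_int(2)[OF weight lk] .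
  ultimately have conv: "(\<lambda>k. wmeas w (A k)) \<longlonglongrightarrow> wmeas w (cube a l)"
    using weight_int(2)[OF weight l]
    by (intro tendsto_ennrealD[of "\<lambda>k. wmeas w (A k)"]) (auto intro!: always_eventually less_imp_le)
  have W0: "wmeas w (cube a l) > 0" using weight_int(2)[OF weight l] .
  have "\<exists>k. c < avgI w g (cube a l) / ennreal (wmeas w (A k))"
  proof (cases "avgI w g (cube a l) = top")
    case True
    then show ?thesis using c W0 Wp by (auto simp: ennreal_top_divide)
  next
    case False
    then obtain Ir where Ir: "avgI w g (cube a l) = ennreal Ir" "Ir \<ge> 0" by (cases "avgI w g (cube a l)") auto
    have "c \<noteq> top" using c by auto
    then obtain cr where cr: "c = ennreal cr" "cr \<ge> 0" by (cases c) auto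
    have "cr < Ir / wmeas w (cube a l)"
      using c W0 Ir cr by (simp add: divide_ennreal ennreal_less_iff)
    then have "cr * wmeas w (cube a l) < Ir" using W0 by (simp add: pos_less_divide_eq)
    moreover have "(\<lambda>k. cr * wmeas w (A k)) \<longlonglongrightarrow> cr * wmeas w (cube a l)"
      by (intro tendsto_mult conv tendsto_const)
    ultimately have "eventually (\<lambda>k. cr * wmeas w (A k) < Ir) sequentially"
      by (simp add: order_tendstoD)
    then obtain k where "cr * wmeas w (A k) < Ir" by (auto dest: eventually_happens)
    then have "cr < Ir / wmeas w (A k)" using Wp[of k] by (simp add: pos_less_divide_eq)
    then have "ennreal cr < ennreal Ir / ennreal (wmeas w (A k))"
      using Ir cr Wp[of k] by (simp add: divide_ennreal ennreal_less_iff)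
    then show ?thesis using Ir cr by auto
  qed
  then obtain k where k: "c < avgI w g (cube a l) / ennreal (wmeas w (A k))" by auto
  also have "\<dots> \<le> avgI w g (A k) / ennreal (wmeas w (A k))"
    by (intro divide_right_mono_ennreal avgI_mono sub)
  finally show ?thesis
    using xb[of k] lk[of k] unfolding A_def by blast
qed

lemma level_eq:
  "{x. c < Mw w g x} = \<Union>{box a (a + l *\<^sub>R One) | a l. l > 0 \<and> c < avgI w g (cube a l) / ennreal (wmeas w (cube a l))}"
proof (intro equalityI subsetI)
  fix x assume "x \<in> {x. c < Mw w g x}"
  then have "c < Mw w g x" by simp
  then obtain Q where Q: "is_cube Q" "x \<in> Q" "c < avgI w g Q / ennreal (wmeas w Q)"
    unfolding Mw_alt less_SUP_iff by auto
  then obtain a l where al: "l > 0" "Q = cube a l" by (auto simp: is_cube_iff)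
  from enlarge[OF al(1) Q(2)[unfolded al(2)] Q(3)[unfolded al(2)]]
  show "x \<in> \<Union>{box a (a + l *\<^sub>R One) | a l. l > 0 \<and> c < avgI w g (cube a l) / ennreal (wmeas w (cube a l))}"
    by blast
next
  fix x assume "x \<in> \<Union>{box a (a + l *\<^sub>R One) | a l. l > 0 \<and> c < avgI w g (cube a l) / ennreal (wmeas w (cube a l))}"
  then obtain a l where al: "l > 0" "c < avgI w g (cube a l) / ennreal (wmeas w (cube a l))" "x \<in> box a (a + l *\<^sub>R One)"
    by auto
  then have "x \<in> cube a l" using box_sub_cube by blast
  then show "x \<in> {x. c < Mw w g x}" using Mw_ge[OF al(1) \<open>x \<in> cube a l\<close>, of w g] al(2) by (auto intro: order.strict_trans2)
qed

lemma level_open: "open {x. c < Mw w g x}"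
  unfolding level_eq by (intro open_Union) (auto simp: open_box)

lemma Mw_measurable[measurable]: "Mw w g \<in> borel_measurable lebesgue"
proof (rule borel_measurableI_greater)
  fix c
  have "{x. c < Mw w g x} \<in> sets borel" using level_open by simp
  then show "{x \<in> space lebesgue. c < Mw w g x} \<in> sets lebesgue" by auto
qed

end


lemma cube_nonempty: "l \<ge> 0 \<Longrightarrow> a \<in> cube a l"
  by (simp add: mem_cube)

lemma vitali_finite:
  fixes F :: "('a::euclidean_space \<times> real) set"
  assumes "finite F" "\<forall>p\<in>F. snd p > 0"
  shows "\<exists>G \<subseteq> F. disjoint_family_on (\<lambda>p. cube (fst p) (snd p)) G \<and>
     (\<Union>p\<in>F. cube (fst p) (snd p)) \<subseteq> (\<Union>p\<in>G. cube (fst p - snd p *\<^sub>R One) (3 * snd p))"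
  using assms
proof (induction "card F" arbitrary: F rule: less_induct)
  case less
  show ?case
  proof (cases "F = {}")
    case True then show ?thesis by (intro exI[of _ "{}"]) (auto simp: disjoint_family_on_def)
  next
    case False
    define L where "L = Max (snd ` F)"
    have "L \<in> snd ` F" unfolding L_def using False less.prems by (intro Max_in) auto
    then obtain a l where al: "(a, l) \<in> F" "l = L" by force
    have maxl: "snd p \<le> l" if "p \<in> F" for p
      using that less.prems al unfolding L_def by (simp add: Max_ge)
    have lpos: "l > 0" using al less.prems by force
    define F' where "F' = {p \<in> F. cube (fst p) (snd p) \<inter> cube a l = {}}"
    have "(a, l) \<notin> F'" using cube_nonempty[of l a] lpos by (auto simp: F'_def)
    then have F'sub: "F' \<subset> F" using al unfolding F'_def by blast
    then have "card F' < card F" using less.prems by (intro psubset_card_mono) auto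
    then obtain G' where G': "G' \<subseteq> F'" "disjoint_family_on (\<lambda>p. cube (fst p) (snd p)) G'"
      "(\<Union>p\<in>F'. cube (fst p) (snd p)) \<subseteq> (\<Union>p\<in>G'. cube (fst p - snd p *\<^sub>R One) (3 * snd p))"
      using less.hyps[of F'] less.prems F'sub by (auto simp: F'_def)
    define G where "G = insert (a, l) G'"
    have "G \<subseteq> F" using G'(1) F'sub al by (auto simp: G_def)
    moreover have "disjoint_family_on (\<lambda>p. cube (fst p) (snd p)) G"
      using G'(1,2) unfolding G_def disjoint_family_on_def F'_def by auto
    moreover have "(\<Union>p\<in>F. cube (fst p) (snd p)) \<subseteq> (\<Union>p\<in>G. cube (fst p - snd p *\<^sub>R One) (3 * snd p))"
    proof
      fix x assume "x \<in> (\<Union>p\<in>F. cube (fst p) (snd p))"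
      then obtain p where p: "p \<in> F" "x \<in> cube (fst p) (snd p)" by auto
      show "x \<in> (\<Union>p\<in>G. cube (fst p - snd p *\<^sub>R One) (3 * snd p))"
      proof (cases "p \<in> F'")
        case True then show ?thesis using G'(3) p unfolding G_def by blast
      next
        case False
        then obtain y where y: "y \<in> cube (fst p) (snd p)" "y \<in> cube a l" using p by (auto simp: F'_def)
        have "cube (fst p) (snd p) \<subseteq> cube (a - l *\<^sub>R One) (3 * l)"
          using cube_tri[OF y(2) y(1) maxl[OF p(1)]] .
        then show ?thesis using p unfolding G_def by force
      qed
    qed
    ultimately show ?thesis by blast
  qed
qed


context wctx begin

definition "K0 = C1 * C1 powr (1 / s) * 3 ^ DIM('a)"

lemma K0pos: "K0 > 0" using C1pos by (simp add: K0_def)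

lemma vw_rel: "0 < w y \<Longrightarrow> w y powr s = w y * w y powr (s - 1)"
  by (simp add: powr_diff field_simps powr_add[symmetric])

lemma cube_weak:
  assumes g[measurable]: "g \<in> borel_measurable lebesgue" and l: "l > 0" and c: "c > 0"
    and avg: "ennreal c < avgI w g (cube a l) / ennreal (wmeas w (cube a l))"
  shows "ennreal (wmeas v (cube (a - l *\<^sub>R One) (3 * l)))
     \<le> ennreal (K0 / c) * (\<integral>\<^sup>+ y. ennreal (\<bar>g y\<bar> * v y) * indicator (cube a l) y \<partial>lebesgue)"
proof -
  define T where "T = cube (a - l *\<^sub>R One) (3 * l)"
  define Q where "Q = cube a l"
  define WT where "WT = wmeas w T"
  define VT where "VT = wmeas v T"
  define WQ where "WQ = wmeas w Q"
  define J where "J = (\<integral>\<^sup>+ y. ennreal (\<bar>g y\<bar> * v y) * indicator Q y \<partial>lebesgue)"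
  have l3: "3 * l > 0" using l by simp
  have QT: "Q \<subseteq> T" unfolding Q_def T_def using l by (intro cube_mono_sub) simp
  have WTp: "WT > 0" unfolding WT_def T_def using weight_int(2)[OF weight l3] .
  have VTp: "VT > 0" unfolding VT_def T_def using weight_int(2)[OF vweight l3] .
  have WQp: "WQ > 0" unfolding WQ_def Q_def using weight_int(2)[OF weight l] .
  define k where "k = VT / (C1 * WT)"
  have kp: "k > 0" using VTp WTp C1pos by (simp add: k_def)
  have step1: "ennreal k * avgI w g Q \<le> J"
  proof -
    have "ennreal k * avgI w g Q = (\<integral>\<^sup>+ y. ennreal k * (ennreal (\<bar>g y\<bar> * w y) * indicator Q y) \<partial>lebesgue)"
      unfolding avgI_def Q_def by (rule nn_integral_cmult[symmetric]) auto
    also have "\<dots> \<le> J" unfolding J_def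
    proof (rule nn_integral_mono_AE)
      show "AE x in lebesgue. ennreal k * (ennreal (\<bar>g x\<bar> * w x) * indicator Q x) \<le> ennreal (\<bar>g x\<bar> * v x) * indicator Q x"
        using hlow[OF l3, of "a - l *\<^sub>R One"] aepos
      proof eventually_elim
        case (elim y)
        show ?case
        proof (cases "y \<in> Q")
          case True
          then have "y \<in> T" using QT by auto
          then have hy: "VT / WT \<le> C1 * w y powr (s - 1)" using elim unfolding VT_def WT_def T_def by blast
          have "k = (VT / WT) / C1" by (simp add: k_def)
          also have "\<dots> \<le> w y powr (s - 1)" using hy C1pos by (subst pos_divide_le_eq) (auto simp: mult.commute)
          finally have "k \<le> w y powr (s - 1)" .
          then have "k * (\<bar>g y\<bar> * w y) \<le> w y powr (s - 1) * (\<bar>g y\<bar> * w y)"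
            using elim by (intro mult_right_mono) auto
          also have "\<dots> = \<bar>g y\<bar> * v y" using vw_rel[of y] elim by (simp add: algebra_simps)
          finally show ?thesis using True kp elim by (simp add: ennreal_mult[symmetric] ennreal_leI)
        qed simp
      qed
    qed
    finally show ?thesis .
  qed
  have dbl: "WT * l ^ DIM('a) \<le> C1 powr (1 / s) * (3 * l) ^ DIM('a) * WQ"
    unfolding WT_def WQ_def T_def Q_def
    by (rule doubling[OF l l3]) (use l in \<open>intro cube_mono_sub, simp\<close>)
  have dbl2: "WT \<le> C1 powr (1 / s) * 3 ^ DIM('a) * WQ"
  proof -
    have "WT * l ^ DIM('a) \<le> (C1 powr (1 / s) * 3 ^ DIM('a) * WQ) * l ^ DIM('a)"
      using dbl by (simp add: power_mult_distrib algebra_simps)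
    then show ?thesis using l by simp
  qed
  show ?thesis
  proof (cases "avgI w g Q = top")
    case True
    then have "J = top" using step1 kp by (simp add: ennreal_mult_top top_unique)
    then show ?thesis using K0pos c unfolding J_def Q_def by (simp add: ennreal_mult_top)
  next
    case False
    then obtain Ir where Ir: "avgI w g Q = ennreal Ir" "Ir \<ge> 0" by (cases "avgI w g Q") auto
    have "c < Ir / WQ" using avg Ir WQp c unfolding Q_def[symmetric] WQ_def[symmetric]
      by (simp add: divide_ennreal ennreal_less_iff)
    then have cI: "c * WQ \<le> Ir" using WQp by (simp add: pos_less_divide_eq)
    have "VT * c / K0 \<le> k * (c * WQ)"
    proof -
      have "VT * c / K0 = k * (c * (WT / (C1 powr (1 / s) * 3 ^ DIM('a))))"
        using C1pos WTp by (simp add: k_def K0_def field_simps)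
      also have "\<dots> \<le> k * (c * WQ)"
        using kp c dbl2 C1pos by (intro mult_left_mono) (auto simp: divide_le_eq mult.commute)
      finally show ?thesis .
    qed
    also have "\<dots> \<le> k * Ir" using cI kp by (intro mult_left_mono) auto
    finally have "ennreal (VT * c / K0) \<le> ennreal k * avgI w g Q"
      using Ir kp by (simp add: ennreal_mult[symmetric] ennreal_leI)
    also have "\<dots> \<le> J" by (rule step1)
    finally have VJ: "ennreal (VT * c / K0) \<le> J" .
    have "ennreal VT = ennreal (K0 / c) * ennreal (VT * c / K0)"
    proof -
      have "K0 / c * (VT * c / K0) = VT" using K0pos c by (simp add: field_simps)
      then show ?thesis using K0pos c VTp by (simp add: ennreal_mult[symmetric])
    qed
    also have "\<dots> \<le> ennreal (K0 / c) * J" using VJ by (intro mult_left_mono) auto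
    finally show ?thesis unfolding VT_def J_def T_def Q_def .
  qed
qed

end


context wctx begin

lemma v_meas[measurable]: "(\<lambda>x. w x powr s) \<in> borel_measurable lebesgue"
  using vweight by (simp add: is_weight_def)

lemma weak_type:
  assumes g[measurable]: "g \<in> borel_measurable lebesgue" and c: "c > 0"
  shows "emeasure (density lebesgue (\<lambda>x. ennreal (v x))) {x. ennreal c < Mw w g x}
     \<le> ennreal (K0 / c) * (\<integral>\<^sup>+ y. ennreal (\<bar>g y\<bar> * v y) \<partial>lebesgue)"
proof -
  define M where "M = density lebesgue (\<lambda>x. ennreal (v x))"
  define P where "P = {p. snd p > 0 \<and> ennreal c < avgI w g (cube (fst p) (snd p)) / ennreal (wmeas w (cube (fst p) (snd p)))}"
  define bx where "bx p = box (fst p) (fst p + snd p *\<^sub>R One)" for p :: "'a \<times> real"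
  define RHS where "RHS = ennreal (K0 / c) * (\<integral>\<^sup>+ y. ennreal (\<bar>g y\<bar> * v y) \<partial>lebesgue)"
  have U: "{x. ennreal c < Mw w g x} = \<Union>(bx ` P)"
    unfolding level_eq P_def bx_def by (auto simp: image_iff) blast
  obtain FF where FF: "FF \<subseteq> bx ` P" "countable FF" "\<Union>FF = \<Union>(bx ` P)"
    using Lindelof_openin[of "bx ` P" UNIV] by (auto simp: bx_def open_box)
  have "\<forall>B\<in>FF. \<exists>p. p \<in> P \<and> bx p = B" using FF(1) by blast
  then obtain f where f: "\<forall>B\<in>FF. f B \<in> P \<and> bx (f B) = B" by metis
  define P' where "P' = f ` FF"
  have P'P: "P' \<subseteq> P" using f by (auto simp: P'_def)
  have P'c: "countable P'" using FF(2) by (simp add: P'_def)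
  have UP': "{x. ennreal c < Mw w g x} = \<Union>(bx ` P')"
    unfolding U FF(3)[symmetric] P'_def using f by (auto simp: image_image)
  have sets_bx[measurable]: "bx p \<in> sets M" for p by (simp add: M_def bx_def)
  have cubes_M[measurable]: "cube a l \<in> sets M" for a l by (simp add: M_def)
  have emM: "emeasure M (cube a l) = ennreal (wmeas v (cube a l))" if "l > 0" for a l
    unfolding M_def by (subst emeasure_density) (auto simp: weight_int(1)[OF vweight that])
  show ?thesis
  proof (cases "P' = {}")
    case True
    then show ?thesis unfolding UP' by simp
  next
    case False
    define e where "e = from_nat_into P'"
    have rng: "range e = P'" using False P'c by (simp add: e_def)
    define UU where "UU m = (\<Union>k\<in>{..<m}. bx (e k))" for m
    have inc: "incseq UU" unfolding UU_def incseq_def by (auto intro: order.strict_trans2)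
    have UUall: "(\<Union>m. UU m) = \<Union>(bx ` P')"
      unfolding UU_def rng[symmetric] by auto
    have eqS: "(SUP m. emeasure M (UU m)) = emeasure M (\<Union>m. UU m)"
    proof (rule SUP_emeasure_incseq)
      show "range UU \<subseteq> sets M" by (auto simp: UU_def)
      show "incseq UU" by (rule inc)
    qed
    have "emeasure M (\<Union>(bx ` P')) = (SUP m. emeasure M (UU m))"
      unfolding UUall[symmetric] eqS ..
    also have "\<dots> \<le> RHS"
    proof (rule SUP_least)
      fix m
      define F where "F = e ` {..<m}"
      have Fsub: "F \<subseteq> P" using rng P'P by (auto simp: F_def)
      then have Fpos: "\<forall>p\<in>F. snd p > 0" by (auto simp: P_def)
      obtain G where G: "G \<subseteq> F" "disjoint_family_on (\<lambda>p. cube (fst p) (snd p)) G"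
        "(\<Union>p\<in>F. cube (fst p) (snd p)) \<subseteq> (\<Union>p\<in>G. cube (fst p - snd p *\<^sub>R One) (3 * snd p))"
        using vitali_finite[of F] Fpos by (auto simp: F_def)
      have finG: "finite G" using G(1) by (auto simp: F_def intro: finite_subset)
      have GP: "p \<in> G \<Longrightarrow> p \<in> P" for p using G(1) Fsub by auto
      have "UU m \<subseteq> (\<Union>p\<in>F. cube (fst p) (snd p))"
        unfolding UU_def F_def bx_def using box_sub_cube by fastforce
      also have "\<dots> \<subseteq> (\<Union>p\<in>G. cube (fst p - snd p *\<^sub>R One) (3 * snd p))" by (rule G(3))
      finally have sub: "UU m \<subseteq> (\<Union>p\<in>G. cube (fst p - snd p *\<^sub>R One) (3 * snd p))" .
      have "emeasure M (UU m) \<le> emeasure M (\<Union>p\<in>G. cube (fst p - snd p *\<^sub>R One) (3 * snd p))"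
        using sub finG by (intro emeasure_mono) (auto simp: UU_def)
      also have "\<dots> \<le> (\<Sum>p\<in>G. emeasure M (cube (fst p - snd p *\<^sub>R One) (3 * snd p)))"
        using finG by (intro emeasure_subadditive_finite) auto
      also have "\<dots> \<le> (\<Sum>p\<in>G. ennreal (K0 / c) * (\<integral>\<^sup>+ y. ennreal (\<bar>g y\<bar> * v y) * indicator (cube (fst p) (snd p)) y \<partial>lebesgue))"
      proof (rule sum_mono)
        fix p assume p: "p \<in> G"
        then have pP: "snd p > 0" "ennreal c < avgI w g (cube (fst p) (snd p)) / ennreal (wmeas w (cube (fst p) (snd p)))"
          using GP[OF p] by (auto simp: P_def)
        have "3 * snd p > 0" using pP by simp
        then have "emeasure M (cube (fst p - snd p *\<^sub>R One) (3 * snd p)) = ennreal (wmeas v (cube (fst p - snd p *\<^sub>R One) (3 * snd p)))"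
          by (rule emM)
        also have "\<dots> \<le> ennreal (K0 / c) * (\<integral>\<^sup>+ y. ennreal (\<bar>g y\<bar> * v y) * indicator (cube (fst p) (snd p)) y \<partial>lebesgue)"
          by (rule cube_weak[OF g pP(1) c pP(2)])
        finally show "emeasure M (cube (fst p - snd p *\<^sub>R One) (3 * snd p)) \<le> \<dots>" .
      qed
      also have "\<dots> = ennreal (K0 / c) * (\<integral>\<^sup>+ y. (\<Sum>p\<in>G. ennreal (\<bar>g y\<bar> * v y) * indicator (cube (fst p) (snd p)) y) \<partial>lebesgue)"
        by (subst nn_integral_sum) (auto simp: sum_distrib_left)
      also have "\<dots> \<le> RHS" unfolding RHS_def
      proof (intro mult_left_mono nn_integral_mono)
        fix y
        have "(\<Sum>p\<in>G. ennreal (\<bar>g y\<bar> * v y) * indicator (cube (fst p) (snd p)) y)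
          = ennreal (\<bar>g y\<bar> * v y) * (\<Sum>p\<in>G. indicator (cube (fst p) (snd p)) y)"
          by (simp add: sum_distrib_left)
        also have "(\<Sum>p\<in>G. indicator (cube (fst p) (snd p)) y :: ennreal) = indicator (\<Union>p\<in>G. cube (fst p) (snd p)) y"
          by (rule indicator_UN_disjoint[OF finG G(2), symmetric])
        also have "ennreal (\<bar>g y\<bar> * v y) * (indicator (\<Union>p\<in>G. cube (fst p) (snd p)) y :: ennreal) \<le> ennreal (\<bar>g y\<bar> * v y)"
          by (simp add: indicator_def)
        finally show "(\<Sum>p\<in>G. ennreal (\<bar>g y\<bar> * v y) * indicator (cube (fst p) (snd p)) y) \<le> ennreal (\<bar>g y\<bar> * v y)" .
      qed auto
      finally show "emeasure M (UU m) \<le> RHS" .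
    qed
    finally show ?thesis unfolding UP' M_def RHS_def .
  qed
qed

end


lemma int_pow:
  fixes b e :: real
  assumes b: "b \<ge> 0" and e: "e > -1"
  shows "(\<integral>\<^sup>+ t. ennreal (t powr e) * indicator {0<..<b} t \<partial>lborel) = ennreal (b powr (e + 1) / (e + 1))"
proof -
  define f where "f t = (if t \<in> {0..b} then t powr e else 0)" for t :: real
  have hi: "(f has_integral (b powr (e + 1) / (e + 1))) UNIV"
    unfolding f_def has_integral_restrict_UNIV using has_integral_powr_from_0[OF e b] .
  have fm: "f \<in> borel_measurable borel" unfolding f_def by measurable
  have fn: "0 \<le> f t" for t by (simp add: f_def)
  have I: "integral\<^sup>N lborel f = ennreal (b powr (e + 1) / (e + 1))"
    by (rule nn_integral_has_integral_lborel[OF fm fn hi])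
  have "(\<integral>\<^sup>+ t. ennreal (t powr e) * indicator {0<..<b} t \<partial>lborel) = integral\<^sup>N lborel f"
  proof (rule nn_integral_cong_AE)
    show "AE x in lborel. ennreal (x powr e) * indicator {0<..<b} x = ennreal (f x)"
      using AE_lborel_singleton[of b] AE_lborel_singleton[of 0]
      by eventually_elim (auto simp: f_def indicator_def)
  qed
  then show ?thesis using I by simp
qed

lemma layer_point:
  fixes z :: ennreal and q :: real
  assumes q: "q > 0"
  shows "enn_powr z q \<le> (\<integral>\<^sup>+ t. ennreal (q * t powr (q - 1)) * indicator {t. 0 < t \<and> ennreal t < z} t \<partial>lborel)"
proof -
  have part: "(\<integral>\<^sup>+ t. ennreal (q * t powr (q - 1)) * indicator {0<..<a} t \<partial>lborel) = ennreal (a powr q)"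
    if a: "a \<ge> 0" for a
  proof -
    have "(\<integral>\<^sup>+ t. ennreal (q * t powr (q - 1)) * indicator {0<..<a} t \<partial>lborel)
       = (\<integral>\<^sup>+ t. ennreal q * (ennreal (t powr (q - 1)) * indicator {0<..<a} t) \<partial>lborel)"
      using q by (intro nn_integral_cong) (simp add: ennreal_mult mult.assoc)
    also have "\<dots> = ennreal q * (\<integral>\<^sup>+ t. ennreal (t powr (q - 1)) * indicator {0<..<a} t \<partial>lborel)"
      by (rule nn_integral_cmult) measurable
    also have "\<dots> = ennreal q * ennreal (a powr (q - 1 + 1) / (q - 1 + 1))"
      using a q by (subst int_pow) auto
    also have "\<dots> = ennreal (a powr q)" using q a by (simp add: ennreal_mult[symmetric])
    finally show ?thesis .
  qed
  have setq: "{t. 0 < t \<and> ennreal t < ennreal a} = {0<..<a}" if "a \<ge> 0" for a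
    using that by (auto simp: ennreal_less_iff)
  show ?thesis
  proof (cases z)
    case (real a)
    then show ?thesis using part[of a] setq[of a] by (simp add: enn_powr_def)
  next
    case top
    have big: "ennreal (real n) \<le> (\<integral>\<^sup>+ t. ennreal (q * t powr (q - 1)) * indicator {t. 0 < t \<and> ennreal t < z} t \<partial>lborel)" for n :: nat
    proof -
      define a where "a = real n powr (1 / q)"
      have a0: "a \<ge> 0" by (simp add: a_def)
      have "a powr q = real n" using q by (cases "n = 0") (auto simp: a_def powr_powr)
      then have "ennreal (real n) = (\<integral>\<^sup>+ t. ennreal (q * t powr (q - 1)) * indicator {0<..<a} t \<partial>lborel)"
        using part[OF a0] by simp
      also have "\<dots> \<le> (\<integral>\<^sup>+ t. ennreal (q * t powr (q - 1)) * indicator {t. 0 < t \<and> ennreal t < z} t \<partial>lborel)"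
        using top by (intro nn_integral_mono) (auto simp: indicator_def)
      finally show ?thesis .
    qed
    have "(\<integral>\<^sup>+ t. ennreal (q * t powr (q - 1)) * indicator {t. 0 < t \<and> ennreal t < z} t \<partial>lborel) = top"
    proof (rule ccontr)
      assume ne: "\<not> ?thesis"
      then obtain r where r: "(\<integral>\<^sup>+ t. ennreal (q * t powr (q - 1)) * indicator {t. 0 < t \<and> ennreal t < z} t \<partial>lborel) = ennreal r" "r \<ge> 0"
        by (cases "(\<integral>\<^sup>+ t. ennreal (q * t powr (q - 1)) * indicator {t. 0 < t \<and> ennreal t < z} t \<partial>lborel)") auto
      obtain n :: nat where n: "r < real n" using reals_Archimedean2 by blast
      have "ennreal (real n) \<le> ennreal r" using big[of n] r by simp
      then have "real n \<le> r" using r by (simp add: ennreal_le_iff)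
      then show False using n by simp
    qed
    then show ?thesis by simp
  qed
qed


context wctx begin

lemma trunc_bound:
  assumes t: "t > 0" and g[measurable]: "g \<in> borel_measurable lebesgue"
  shows "Mw w g x \<le> Mw w (\<lambda>y. if t / 2 < \<bar>g y\<bar> then g y else 0) x + ennreal (t / 2)"
proof (rule Mw_le)
  fix a l assume l: "l > 0" and x: "x \<in> cube a l"
  define gt where "gt = (\<lambda>y. if t / 2 < \<bar>g y\<bar> then g y else 0)"
  define W where "W = wmeas w (cube a l)"
  have Wp: "W > 0" using weight_int(2)[OF weight l] by (simp add: W_def)
  have "avgI w g (cube a l) \<le> (\<integral>\<^sup>+ y. ennreal (\<bar>gt y\<bar> * w y) * indicator (cube a l) y
        + ennreal (t / 2) * (ennreal (w y) * indicator (cube a l) y) \<partial>lebesgue)"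
    unfolding avgI_def
  proof (rule nn_integral_mono)
    fix y
    show "ennreal (\<bar>g y\<bar> * w y) * indicator (cube a l) y
      \<le> ennreal (\<bar>gt y\<bar> * w y) * indicator (cube a l) y + ennreal (t / 2) * (ennreal (w y) * indicator (cube a l) y)"
    proof (cases "w y \<ge> 0 \<and> y \<in> cube a l")
      case True
      show ?thesis
      proof (cases "t / 2 < \<bar>g y\<bar>")
        case True
        then show ?thesis using \<open>w y \<ge> 0 \<and> y \<in> cube a l\<close> by (simp add: gt_def)
      next
        case False
        then have "\<bar>g y\<bar> * w y \<le> t / 2 * w y" using \<open>w y \<ge> 0 \<and> y \<in> cube a l\<close> by (intro mult_right_mono) auto
        then have "ennreal (\<bar>g y\<bar> * w y) \<le> ennreal (t / 2) * ennreal (w y)"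
          using t \<open>w y \<ge> 0 \<and> y \<in> cube a l\<close> by (subst ennreal_mult[symmetric]) (auto intro: ennreal_leI)
        then show ?thesis using \<open>w y \<ge> 0 \<and> y \<in> cube a l\<close> by (auto simp: gt_def intro: order.trans add_increasing)
      qed
    next
      case False
      then show ?thesis by (auto simp: indicator_def ennreal_neg mult_nonneg_nonpos)
    qed
  qed
  also have "\<dots> = avgI w gt (cube a l) + ennreal (t / 2) * ennreal W"
    unfolding avgI_def W_def using t
    by (subst nn_integral_add) (auto simp: nn_integral_cmult weight_int(1)[OF weight l] gt_def)
  finally have le: "avgI w g (cube a l) \<le> avgI w gt (cube a l) + ennreal (t / 2) * ennreal W" .
  have "avgI w g (cube a l) / ennreal W \<le> (avgI w gt (cube a l) + ennreal (t / 2) * ennreal W) / ennreal W"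
    by (rule divide_right_mono_ennreal[OF le])
  also have "\<dots> = avgI w gt (cube a l) / ennreal W + ennreal (t / 2)"
    using Wp t by (simp add: add_divide_distrib_ennreal ennreal_mult[symmetric] divide_ennreal)
  also have "\<dots> \<le> Mw w gt x + ennreal (t / 2)"
    using Mw_ge[OF l x, of w gt] by (simp add: W_def add_right_mono)
  finally show "avgI w g (cube a l) / ennreal (wmeas w (cube a l)) \<le> Mw w gt x + ennreal (t / 2)"
    by (simp add: W_def)
qed

lemma level_sub:
  assumes t: "t > 0" and g[measurable]: "g \<in> borel_measurable lebesgue" and lt: "ennreal t < Mw w g x"
  shows "ennreal (t / 2) < Mw w (\<lambda>y. if t / 2 < \<bar>g y\<bar> then g y else 0) x"
proof (rule ccontr)
  assume "\<not> ?thesis"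
  then have "Mw w (\<lambda>y. if t / 2 < \<bar>g y\<bar> then g y else 0) x \<le> ennreal (t / 2)" by simp
  then have "Mw w g x \<le> ennreal (t / 2) + ennreal (t / 2)"
    using trunc_bound[OF t g, of x] by (meson add_right_mono order.trans)
  also have "\<dots> = ennreal t" using t by (simp add: ennreal_plus[symmetric] del: ennreal_plus)
  finally show False using lt by simp
qed

end


lemma pair_sf: "pair_sigma_finite (lebesgue :: 'a::euclidean_space measure) (lborel :: real measure)"
  unfolding pair_sigma_finite_def using sigma_finite_lebesgue sigma_finite_lborel by auto

lemma ennreal3: "X \<ge> 0 \<Longrightarrow> Y \<ge> 0 \<Longrightarrow> Z \<ge> 0 \<Longrightarrow> ennreal X * ennreal Y * ennreal Z = ennreal (X * Y * Z)"
  by (simp add: ennreal_mult)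

lemma powr_id1: "t > 0 \<Longrightarrow> q * t powr (q - 1) * (2 * K / t) * X = 2 * K * q * X * t powr (q - 2)"
  for t q K X :: real
proof -
  assume t: "t > 0"
  have "t powr (q - 1) = t powr (q - 2) * t" using powr_add[of t "q - 2" 1] t by simp
  then show ?thesis using t by (simp add: field_simps)
qed

lemma powr_id2:
  fixes G K q V :: real assumes G: "G \<ge> 0" and q: "q > 1"
  shows "2 * K * q * (G * V) * ((2 * G) powr (q - 2 + 1) / (q - 2 + 1)) = 2 powr q * K * q / (q - 1) * (G powr q * V)"
proof (cases "G = 0")
  case True then show ?thesis using q by simp
next
  case False
  then have Gp: "G > 0" using G by simp
  have a: "(2 * G) powr (q - 1) = 2 powr (q - 1) * G powr (q - 1)" using Gp by (simp add: powr_mult)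
  have b: "2 * 2 powr (q - 1) = 2 powr q" using powr_add[of 2 1 "q - 1"] by simp
  have c: "G * G powr (q - 1) = G powr q" using powr_add[of G 1 "q - 1"] Gp by simp
  have e: "q - 2 + 1 = q - 1" by simp
  have "2 * K * q * (G * V) * ((2 * G) powr (q - 2 + 1) / (q - 2 + 1))
      = 2 * K * q * (G * V) * ((2 powr (q - 1) * G powr (q - 1)) / (q - 1))"
    by (simp only: e a)
  also have "\<dots> = (2 * 2 powr (q - 1)) * K * q * ((G * G powr (q - 1)) * V) / (q - 1)"
    by (simp add: field_simps)
  also have "\<dots> = 2 powr q * K * q / (q - 1) * (G powr q * V)" using b c by simp
  finally show ?thesis .
qed

context wctx begin

lemma level_sets[measurable]: "{x. c < Mw w g x} \<in> sets lebesgue"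
proof -
  have "{x. c < Mw w g x} \<in> sets borel" using level_open by simp
  then show ?thesis by auto
qed

lemma strong_type:
  assumes g[measurable]: "g \<in> borel_measurable lebesgue" and q: "q > 1"
  shows "(\<integral>\<^sup>+ x. enn_powr (Mw w g x) q * ennreal (v x) \<partial>lebesgue)
     \<le> ennreal (2 powr q * K0 * q / (q - 1)) * (\<integral>\<^sup>+ x. ennreal (\<bar>g x\<bar> powr q * v x) \<partial>lebesgue)"
proof -
  interpret P: pair_sigma_finite "lebesgue :: 'a measure" "lborel :: real measure" by (rule pair_sf)
  define KS where "KS = 2 powr q * K0 * q / (q - 1)"
  have KSp: "KS > 0" using K0pos q by (simp add: KS_def)
  define \<phi> where "\<phi> t = ennreal (q * t powr (q - 1))" for t :: real
  define gt where "gt t y = (if t / 2 < \<bar>g y\<bar> then g y else 0)" for t y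
  have gt_meas[measurable]: "gt t \<in> borel_measurable lebesgue" for t unfolding gt_def by measurable
  have "(\<integral>\<^sup>+ x. enn_powr (Mw w g x) q * ennreal (v x) \<partial>lebesgue)
      \<le> (\<integral>\<^sup>+ x. (\<integral>\<^sup>+ t. \<phi> t * indicator {t. 0 < t \<and> ennreal t < Mw w g x} t * ennreal (v x) \<partial>lborel) \<partial>lebesgue)"
  proof (rule nn_integral_mono)
    fix x
    have "enn_powr (Mw w g x) q * ennreal (v x)
       \<le> (\<integral>\<^sup>+ t. \<phi> t * indicator {t. 0 < t \<and> ennreal t < Mw w g x} t \<partial>lborel) * ennreal (v x)"
      unfolding \<phi>_def using q by (intro mult_right_mono layer_point) auto
    also have "\<dots> = (\<integral>\<^sup>+ t. \<phi> t * indicator {t. 0 < t \<and> ennreal t < Mw w g x} t * ennreal (v x) \<partial>lborel)"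
      unfolding \<phi>_def by (rule nn_integral_multc[symmetric]) measurable
    finally show "enn_powr (Mw w g x) q * ennreal (v x) \<le> \<dots>" .
  qed
  also have "\<dots> = (\<integral>\<^sup>+ t. (\<integral>\<^sup>+ x. \<phi> t * indicator {t. 0 < t \<and> ennreal t < Mw w g x} t * ennreal (v x) \<partial>lebesgue) \<partial>lborel)"
    by (rule P.Fubini'[symmetric]) (unfold \<phi>_def, measurable)
  also have "\<dots> \<le> (\<integral>\<^sup>+ t. (\<integral>\<^sup>+ x. \<phi> t * ennreal (2 * K0 / t) * (ennreal (\<bar>g x\<bar> * v x) * indicator {t. 0 < t \<and> t < 2 * \<bar>g x\<bar>} t) \<partial>lebesgue) \<partial>lborel)"
  proof (rule nn_integral_mono)
    fix t :: real
    show "(\<integral>\<^sup>+ x. \<phi> t * indicator {t. 0 < t \<and> ennreal t < Mw w g x} t * ennreal (v x) \<partial>lebesgue)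
      \<le> (\<integral>\<^sup>+ x. \<phi> t * ennreal (2 * K0 / t) * (ennreal (\<bar>g x\<bar> * v x) * indicator {t. 0 < t \<and> t < 2 * \<bar>g x\<bar>} t) \<partial>lebesgue)"
    proof (cases "t > 0")
      case False
      then show ?thesis by (simp add: indicator_def)
    next
      case True
      define M where "M = density lebesgue (\<lambda>x. ennreal (v x))"
      have "(\<integral>\<^sup>+ x. \<phi> t * indicator {t. 0 < t \<and> ennreal t < Mw w g x} t * ennreal (v x) \<partial>lebesgue)
         = (\<integral>\<^sup>+ x. \<phi> t * (ennreal (v x) * indicator {x. ennreal t < Mw w g x} x) \<partial>lebesgue)"
        using True by (intro nn_integral_cong) (auto simp: indicator_def)
      also have "\<dots> = \<phi> t * emeasure M {x. ennreal t < Mw w g x}"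
      proof -
        have "{x. ennreal t < Mw w g x} \<in> sets borel" using level_open by simp
        then have setm: "{x. ennreal t < Mw w g x} \<in> sets lebesgue" by auto
        show ?thesis
          unfolding M_def by (subst emeasure_density[OF _ setm]) (auto simp: \<phi>_def intro: nn_integral_cmult)
      qed
      also have "\<dots> \<le> \<phi> t * emeasure M {x. ennreal (t / 2) < Mw w (gt t) x}"
      proof -
        have ls: "ennreal (t / 2) < Mw w (gt t) x" if "ennreal t < Mw w g x" for x
          unfolding gt_def using level_sub[OF True g that] .
        show ?thesis
          unfolding M_def using ls level_sets by (intro mult_left_mono emeasure_mono) auto
      qed
      also have "\<dots> \<le> \<phi> t * (ennreal (K0 / (t / 2)) * (\<integral>\<^sup>+ y. ennreal (\<bar>gt t y\<bar> * v y) \<partial>lebesgue))"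
        unfolding M_def using True by (intro mult_left_mono weak_type) auto
      also have "(\<integral>\<^sup>+ y. ennreal (\<bar>gt t y\<bar> * v y) \<partial>lebesgue)
          = (\<integral>\<^sup>+ x. ennreal (\<bar>g x\<bar> * v x) * indicator {t. 0 < t \<and> t < 2 * \<bar>g x\<bar>} t \<partial>lebesgue)"
        using True by (intro nn_integral_cong) (auto simp: gt_def indicator_def)
      also have "\<phi> t * (ennreal (K0 / (t / 2)) * \<dots>)
          = (\<integral>\<^sup>+ x. \<phi> t * ennreal (2 * K0 / t) * (ennreal (\<bar>g x\<bar> * v x) * indicator {t. 0 < t \<and> t < 2 * \<bar>g x\<bar>} t) \<partial>lebesgue)"
        by (subst nn_integral_cmult) (auto simp: mult.assoc mult.commute)
      finally show ?thesis .
    qed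
  qed
  also have "\<dots> = (\<integral>\<^sup>+ x. (\<integral>\<^sup>+ t. \<phi> t * ennreal (2 * K0 / t) * (ennreal (\<bar>g x\<bar> * v x) * indicator {t. 0 < t \<and> t < 2 * \<bar>g x\<bar>} t) \<partial>lborel) \<partial>lebesgue)"
    by (rule P.Fubini') (unfold \<phi>_def, measurable)
  also have "\<dots> = (\<integral>\<^sup>+ x. ennreal KS * ennreal (\<bar>g x\<bar> powr q * v x) \<partial>lebesgue)"
  proof (rule nn_integral_cong)
    fix x
    define G where "G = \<bar>g x\<bar>"
    have G0: "G \<ge> 0" by (simp add: G_def)
    have v0: "v x \<ge> 0" by simp
    have "(\<integral>\<^sup>+ t. \<phi> t * ennreal (2 * K0 / t) * (ennreal (\<bar>g x\<bar> * v x) * indicator {t. 0 < t \<and> t < 2 * \<bar>g x\<bar>} t) \<partial>lborel)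
        = (\<integral>\<^sup>+ t. ennreal (2 * K0 * q * (G * v x)) * (ennreal (t powr (q - 2)) * indicator {0<..<2 * G} t) \<partial>lborel)"
    proof (rule nn_integral_cong)
      fix t :: real
      show "\<phi> t * ennreal (2 * K0 / t) * (ennreal (\<bar>g x\<bar> * v x) * indicator {t. 0 < t \<and> t < 2 * \<bar>g x\<bar>} t)
        = ennreal (2 * K0 * q * (G * v x)) * (ennreal (t powr (q - 2)) * indicator {0<..<2 * G} t)"
      proof (cases "0 < t \<and> t < 2 * G")
        case True
        then have tp: "t > 0" by simp
        have "\<phi> t * ennreal (2 * K0 / t) * ennreal (G * v x) = ennreal (q * t powr (q - 1) * (2 * K0 / t) * (G * v x))"
          unfolding \<phi>_def using tp q K0pos G0 v0 ennreal3[of "q * t powr (q - 1)" "2 * K0 / t" "G * v x"]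
          by simp
        also have "\<dots> = ennreal (2 * K0 * q * (G * v x) * t powr (q - 2))" by (simp only: powr_id1[OF tp])
        also have "\<dots> = ennreal (2 * K0 * q * (G * v x)) * ennreal (t powr (q - 2))"
          using q K0pos G0 v0 by (simp add: ennreal_mult)
        finally show ?thesis using True by (simp add: G_def indicator_def)
      next
        case False
        then show ?thesis unfolding G_def indicator_def by auto
      qed
    qed
    also have "\<dots> = ennreal (2 * K0 * q * (G * v x)) * (\<integral>\<^sup>+ t. ennreal (t powr (q - 2)) * indicator {0<..<2 * G} t \<partial>lborel)"
      by (rule nn_integral_cmult) measurable
    also have "\<dots> = ennreal (2 * K0 * q * (G * v x)) * ennreal ((2 * G) powr (q - 2 + 1) / (q - 2 + 1))"
      using G0 q by (subst int_pow) auto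
    also have "\<dots> = ennreal (2 * K0 * q * (G * v x) * ((2 * G) powr (q - 2 + 1) / (q - 2 + 1)))"
      using G0 q K0pos v0 by (intro ennreal_mult[symmetric]) auto
    also have "\<dots> = ennreal (KS * (G powr q * v x))"
      unfolding KS_def by (simp only: powr_id2[OF G0 q])
    also have "\<dots> = ennreal KS * ennreal (\<bar>g x\<bar> powr q * v x)"
      using KSp by (simp add: ennreal_mult G_def)
    finally show "(\<integral>\<^sup>+ t. \<phi> t * ennreal (2 * K0 / t) * (ennreal (\<bar>g x\<bar> * v x) * indicator {t. 0 < t \<and> t < 2 * \<bar>g x\<bar>} t) \<partial>lborel)
       = ennreal KS * ennreal (\<bar>g x\<bar> powr q * v x)" .
  qed
  also have "\<dots> = ennreal KS * (\<integral>\<^sup>+ x. ennreal (\<bar>g x\<bar> powr q * v x) \<partial>lebesgue)"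
    by (rule nn_integral_cmult) measurable
  finally show ?thesis unfolding KS_def .
qed

end


lemma enn_powr_ennreal: "a \<ge> 0 \<Longrightarrow> enn_powr (ennreal a) q = ennreal (a powr q)"
  by (simp add: enn_powr_def)

lemma enn_powr_mono:
  assumes "a \<le> b" "q > 0" shows "enn_powr a q \<le> enn_powr b q"
proof (cases "b = top")
  case True then show ?thesis by (simp add: enn_powr_def)
next
  case False
  then have "a \<noteq> top" using assms(1) by (auto simp: top_unique)
  then show ?thesis using False assms
    by (cases a; cases b) (auto simp: enn_powr_def ennreal_le_iff intro!: ennreal_leI powr_mono2)
qed

lemma enn_powr_add_le:
  assumes q: "q > 0"
  shows "enn_powr (a + b) q \<le> ennreal (2 powr q) * (enn_powr a q + enn_powr b q)"
proof (cases "a = top \<or> b = top")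
  case True
  then show ?thesis by (auto simp: enn_powr_def ennreal_mult_top)
next
  case False
  then obtain x y where xy: "a = ennreal x" "b = ennreal y" "x \<ge> 0" "y \<ge> 0"
    by (cases a; cases b) auto
  have "(x + y) powr q \<le> (2 * max x y) powr q" using xy q by (intro powr_mono2) auto
  also have "\<dots> = 2 powr q * (max x y) powr q" using xy by (simp add: powr_mult)
  also have "(max x y) powr q \<le> x powr q + y powr q"
    by (cases "x \<le> y") (auto simp: max_def)
  then have "2 powr q * (max x y) powr q \<le> 2 powr q * (x powr q + y powr q)" by simp
  finally have "(x + y) powr q \<le> 2 powr q * (x powr q + y powr q)" .
  then show ?thesis using xy
    by (simp add: enn_powr_def ennreal_plus[symmetric] ennreal_mult[symmetric] ennreal_leI del: ennreal_plus)
qed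

lemma morrey_unfold:
  fixes v w :: "'a::euclidean_space \<Rightarrow> real" and g :: "'a \<Rightarrow> ennreal"
  assumes N: "morrey_norm q k v w g = ennreal Nr" and q: "q > 0"
    and Q: "is_cube Q" and WQ: "wmeas w Q > 0"
  shows "(\<integral>\<^sup>+ x. enn_powr (g x) q * ennreal (v x) * indicator Q x \<partial>lebesgue)
     \<le> ennreal (Nr powr q * wmeas w Q powr k)"
proof -
  define I where "I = (\<integral>\<^sup>+ x. enn_powr (g x) q * ennreal (v x) * indicator Q x \<partial>lebesgue)"
  define WK where "WK = wmeas w Q powr k"
  have WKp: "WK > 0" using WQ by (simp add: WK_def)
  have le: "enn_powr (I / ennreal WK) (1 / q) \<le> ennreal Nr"
    unfolding N[symmetric] morrey_norm_def I_def WK_def using Q by (intro SUP_upper2[of Q]) auto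
  show ?thesis
  proof (cases "I / ennreal WK = top")
    case True
    then have "top \<le> ennreal Nr" using le by (simp add: enn_powr_def)
    then show ?thesis by (simp add: top_unique)
  next
    case False
    then obtain y where y: "I / ennreal WK = ennreal y" "y \<ge> 0" by (cases "I / ennreal WK") auto
    have "ennreal (y powr (1 / q)) \<le> ennreal Nr" using le y by (simp add: enn_powr_def)
    then have "y powr (1 / q) \<le> max 0 Nr"
      by (metis ennreal_le_iff ennreal_max_0 max.cobounded1)
    then have "(y powr (1 / q)) powr q \<le> (max 0 Nr) powr q" using q by (intro powr_mono2) auto
    then have yle: "y \<le> (max 0 Nr) powr q" using y q by (simp add: powr_powr)
    have "I = (I / ennreal WK) * ennreal WK"
    proof -
      have "(I / ennreal WK) * ennreal WK = I * (ennreal WK / ennreal WK)" by (rule ennreal_divide_times)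
      also have "ennreal WK / ennreal WK = 1"
        using mult_divide_eq_ennreal[of "ennreal WK" 1] WKp by simp
      finally show ?thesis by simp
    qed
    also have "\<dots> = ennreal (y * WK)" using y WKp by (simp add: ennreal_mult)
    also have "\<dots> \<le> ennreal ((max 0 Nr) powr q * WK)"
      using yle WKp by (intro ennreal_leI mult_right_mono) auto
    finally have "I \<le> ennreal ((max 0 Nr) powr q * WK)" .
    moreover have "ennreal ((max 0 Nr) powr q * WK) \<le> ennreal (Nr powr q * WK)"
    proof (cases "Nr \<ge> 0")
      case True then show ?thesis by simp
    next
      case False then show ?thesis by simp
    qed
    ultimately show ?thesis unfolding I_def WK_def by (rule order.trans)
  qed
qed


lemma geo_alg:
  fixes L0 L W0 W V0 V s k b C1 E :: real
  assumes pos: "L0 > 0" "W0 > 0" "W > 0" "V0 > 0" "V > 0" "C1 > 0" "E > 0"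
    and LL: "L0 \<le> L" and s: "s > 1" and k: "0 < k" "k < 1" and b: "b \<ge> 0"
    and ex: "s - 1 - b * (s * (1 - k)) \<le> 0"
    and h1: "V0 \<le> C1 * L0 powr (1 - s) * W0 powr s"
    and h2: "W powr s \<le> L powr (s - 1) * V"
    and h3: "W0 / W \<le> E * (L / L0) powr (- b)"
  shows "V0 * W powr (k * s) \<le> C1 * E powr (s * (1 - k)) * V * W0 powr (k * s)"
proof -
  define \<rho> where "\<rho> = L / L0"
  define X where "X = W0 / W"
  define e where "e = s * (1 - k)"
  have Lp: "L > 0" using pos LL by simp
  have \<rho>1: "\<rho> \<ge> 1" using LL pos by (simp add: \<rho>_def)
  have Xp: "X > 0" using pos by (simp add: X_def)
  have ep: "e > 0" using s k by (simp add: e_def)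
  have A: "W0 powr s * W powr (k * s) = X powr e * (W powr s * W0 powr (k * s))"
  proof -
    have "X powr e = W0 powr e / W powr e" using pos by (simp add: X_def powr_divide)
    moreover have "W0 powr s = W0 powr e * W0 powr (k * s)" using pos by (simp add: e_def powr_add[symmetric] algebra_simps)
    moreover have "W powr s = W powr e * W powr (k * s)" using pos by (simp add: e_def powr_add[symmetric] algebra_simps)
    ultimately show ?thesis using pos by (simp add: field_simps)
  qed
  have B: "L0 powr (1 - s) = \<rho> powr (s - 1) * L powr (1 - s)"
  proof -
    have e1: "1 - s = -(s - 1)" by simp
    have r1: "\<rho> powr (s - 1) = L powr (s - 1) / L0 powr (s - 1)" using pos Lp by (simp add: \<rho>_def powr_divide)
    have r2: "L powr (1 - s) = 1 / L powr (s - 1)" unfolding e1 by (rule powr_minus_divide)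
    have r3: "L0 powr (1 - s) = 1 / L0 powr (s - 1)" unfolding e1 by (rule powr_minus_divide)
    have p1: "L powr (s - 1) > 0" "L0 powr (s - 1) > 0" using pos Lp by auto
    show ?thesis unfolding r1 r2 r3 using p1 by (simp add: field_simps)
  qed
  have LV: "L powr (1 - s) * W powr s \<le> V"
  proof -
    have "L powr (1 - s) * W powr s \<le> L powr (1 - s) * (L powr (s - 1) * V)"
      using h2 by (intro mult_left_mono) auto
    also have "\<dots> = V" using Lp by (simp add: powr_add[symmetric])
    finally show ?thesis .
  qed
  have Xe: "X powr e \<le> E powr e * \<rho> powr (- b * e)"
  proof -
    have "X powr e \<le> (E * \<rho> powr (- b)) powr e" using h3 Xp ep by (intro powr_mono2) (auto simp: X_def \<rho>_def)
    also have "\<dots> = E powr e * \<rho> powr (- b * e)" using pos \<rho>1 by (simp add: powr_mult powr_powr)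
    finally show ?thesis .
  qed
  have rr: "\<rho> powr (s - 1) * \<rho> powr (- b * e) \<le> 1"
  proof -
    have "\<rho> powr (s - 1) * \<rho> powr (- b * e) = \<rho> powr (s - 1 - b * e)" using \<rho>1 by (simp add: powr_add[symmetric])
    also have "\<dots> \<le> \<rho> powr 0" using \<rho>1 ex by (intro powr_mono) (auto simp: e_def)
    finally show ?thesis using \<rho>1 by simp
  qed
  have "V0 * W powr (k * s) \<le> C1 * L0 powr (1 - s) * W0 powr s * W powr (k * s)"
    using h1 by (intro mult_right_mono) auto
  also have "\<dots> = C1 * (\<rho> powr (s - 1) * X powr e) * (L powr (1 - s) * W powr s) * W0 powr (k * s)"
    using A B by (simp add: algebra_simps)
  also have "\<dots> \<le> C1 * (\<rho> powr (s - 1) * X powr e) * V * W0 powr (k * s)"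
    using LV pos by (intro mult_right_mono mult_left_mono) auto
  also have "\<rho> powr (s - 1) * X powr e \<le> \<rho> powr (s - 1) * (E powr e * \<rho> powr (- b * e))"
    using Xe by (intro mult_left_mono) auto
  also have "\<dots> = E powr e * (\<rho> powr (s - 1) * \<rho> powr (- b * e))" by simp
  also have "\<dots> \<le> E powr e * 1" using rr by (intro mult_left_mono) auto
  finally show ?thesis using pos by (simp add: e_def mult_right_mono mult_left_mono)
qed


lemma nn_set:
  fixes f :: "'a::euclidean_space \<Rightarrow> real"
  assumes int: "set_integrable lebesgue Q f" and nn: "\<And>x. 0 \<le> f x"
  shows "(\<integral>\<^sup>+ x. ennreal (f x) * indicator Q x \<partial>lebesgue) = ennreal (LINT x:Q|lebesgue. f x)"
proof -
  have "(\<integral>\<^sup>+ x. ennreal (f x) * indicator Q x \<partial>lebesgue) = (\<integral>\<^sup>+ x. ennreal (indicator Q x *\<^sub>R f x) \<partial>lebesgue)"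
    by (intro nn_integral_cong) (auto simp: indicator_def)
  also have "\<dots> = ennreal (integral\<^sup>L lebesgue (\<lambda>x. indicator Q x *\<^sub>R f x))"
    using int nn unfolding set_integrable_def by (intro nn_integral_eq_integral) auto
  finally show ?thesis by (simp add: set_lebesgue_integral_def)
qed

lemma rh_alg:
  fixes L0 L LT r CR WT D W W0 :: real
  assumes pos: "L0 > 0" "L > 0" "W > 0" "CR > 0" "WT \<ge> 0" and LT: "LT \<ge> L" and r: "r > 1"
    and h: "W0 \<le> (L0 powr (r - 1) * LT) powr (1 / r) * (CR * WT / LT)"
    and d: "WT \<le> D * W"
  shows "W0 / W \<le> (CR * D) * (L / L0) powr (- (1 - 1 / r))"
proof -
  define b where "b = 1 - 1 / r"
  have b0: "b \<ge> 0" using r by (simp add: b_def)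
  have LTp: "LT > 0" using LT pos by simp
  have e: "(L0 powr (r - 1) * LT) powr (1 / r) / LT = (L0 / LT) powr b"
  proof -
    have bb: "(r - 1) / r = b" using r by (simp add: b_def field_simps)
    have e1: "(L0 powr (r - 1) * LT) powr (1 / r) = L0 powr b * LT powr (1 / r)"
      using pos LTp by (simp add: powr_mult powr_powr bb[symmetric])
    have e2: "LT powr (1 / r) / LT = 1 / LT powr b"
    proof -
      have "LT powr (1 / r) * LT powr b = LT powr 1" using r LTp by (simp add: powr_add[symmetric] b_def)
      then show ?thesis using LTp by (simp add: field_simps)
    qed
    have "(L0 powr (r - 1) * LT) powr (1 / r) / LT = L0 powr b * (LT powr (1 / r) / LT)"
      unfolding e1 by simp
    also have "\<dots> = L0 powr b / LT powr b" unfolding e2 by simp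
    also have "\<dots> = (L0 / LT) powr b" using pos LTp by (simp add: powr_divide)
    finally show ?thesis .
  qed
  have "W0 \<le> ((L0 powr (r - 1) * LT) powr (1 / r) / LT) * (CR * WT)" using h by (simp add: field_simps)
  also have "\<dots> = (L0 / LT) powr b * (CR * WT)" by (simp add: e)
  also have "\<dots> \<le> (L0 / L) powr b * (CR * (D * W))"
  proof (rule mult_mono)
    show "(L0 / LT) powr b \<le> (L0 / L) powr b" using pos LT b0 by (intro powr_mono2 divide_left_mono) auto
    show "CR * WT \<le> CR * (D * W)" using d pos by (intro mult_left_mono) auto
  qed (use pos in auto)
  finally have "W0 \<le> (L0 / L) powr b * (CR * (D * W))" .
  moreover have "(L0 / L) powr b = (L / L0) powr (- b)"
    using pos by (simp add: powr_minus_divide powr_divide)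
  ultimately have "W0 \<le> (CR * D) * (L / L0) powr (- b) * W" by (simp add: algebra_simps)
  then show ?thesis using pos by (simp add: b_def pos_divide_le_eq)
qed

locale rhctx = wctx w s C1 for w :: "'a::euclidean_space \<Rightarrow> real" and s C1 :: real +
  fixes r CR :: real
  assumes r1: "r > 1" and CRpos: "CR > 0"
    and RHw: "\<And>Q. is_cube Q \<Longrightarrow> set_integrable lebesgue Q (\<lambda>x. w x powr r) \<and>
        ((LINT x:Q|lebesgue. w x powr r) / measure lebesgue Q) powr (1 / r) \<le> CR * (wmeas w Q / measure lebesgue Q)"
begin

lemma RH_bound:
  assumes l0: "l0 > 0" and m: "m > 0" and sub: "cube a0 l0 \<subseteq> cube b m"
  shows "wmeas w (cube a0 l0) \<le> ((l0 ^ DIM('a)) powr (r - 1) * m ^ DIM('a)) powr (1 / r)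
            * (CR * wmeas w (cube b m) / m ^ DIM('a))"
proof -
  define W0 where "W0 = wmeas w (cube a0 l0)"
  define WT where "WT = wmeas w (cube b m)"
  define L0 where "L0 = l0 ^ DIM('a)"
  define LT where "LT = m ^ DIM('a)"
  define AT where "AT = (LINT x:cube b m|lebesgue. w x powr r)"
  have L0p: "L0 > 0" using l0 by (simp add: L0_def)
  have LTp: "LT > 0" using m by (simp add: LT_def)
  have W0p: "W0 > 0" using weight_int(2)[OF weight l0] by (simp add: W0_def)
  have WTp: "WT > 0" using weight_int(2)[OF weight m] by (simp add: WT_def)
  have RH: "set_integrable lebesgue (cube b m) (\<lambda>x. w x powr r)"
    "(AT / LT) powr (1 / r) \<le> CR * (WT / LT)"
    using RHw[of "cube b m"] m by (auto simp: is_cube_iff AT_def WT_def LT_def measure_cube)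
  have ATeq: "(\<integral>\<^sup>+ x. ennreal (w x powr r) * indicator (cube b m) x \<partial>lebesgue) = ennreal AT"
    unfolding AT_def by (rule nn_set[OF RH(1)]) simp
  have AT0: "AT \<ge> 0" unfolding AT_def set_lebesgue_integral_def
    by (intro integral_nonneg_AE) auto
  have J: "enn_powr (\<integral>\<^sup>+ x. ennreal (w x * 1) * indicator (cube a0 l0) x \<partial>lebesgue) r
         \<le> ennreal (L0 powr (r - 1)) * (\<integral>\<^sup>+ x. ennreal (w x powr r * 1) * indicator (cube a0 l0) x \<partial>lebesgue)"
    using r1 aepos l0 unfolding L0_def
    by (intro jensen_enn) (auto elim!: eventually_mono simp: nn_integral_const_indicator_cube[of l0 1, simplified])
  have "(\<integral>\<^sup>+ x. ennreal (w x powr r * 1) * indicator (cube a0 l0) x \<partial>lebesgue)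
      \<le> (\<integral>\<^sup>+ x. ennreal (w x powr r) * indicator (cube b m) x \<partial>lebesgue)"
    using sub by (intro nn_integral_mono) (auto simp: indicator_def)
  also have "\<dots> = ennreal AT" by (rule ATeq)
  finally have le1: "(\<integral>\<^sup>+ x. ennreal (w x powr r * 1) * indicator (cube a0 l0) x \<partial>lebesgue) \<le> ennreal AT" .
  have W0eq: "(\<integral>\<^sup>+ x. ennreal (w x * 1) * indicator (cube a0 l0) x \<partial>lebesgue) = ennreal W0"
    using weight_int(1)[OF weight l0] by (simp add: W0_def)
  have "ennreal (W0 powr r) \<le> ennreal (L0 powr (r - 1)) * ennreal AT"
    using J le1 W0eq W0p by (simp add: enn_powr_def) (meson mult_left_mono order.trans zero_le)
  then have W0r: "W0 powr r \<le> L0 powr (r - 1) * AT"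
    using AT0 L0p by (simp add: ennreal_mult[symmetric] ennreal_le_iff)
  have CRW: "CR * (WT / LT) \<ge> 0" using RH(2) by (meson order.trans powr_ge_zero)
  have "AT / LT = ((AT / LT) powr (1 / r)) powr r" using AT0 LTp r1 by (simp add: powr_powr)
  also have "\<dots> \<le> (CR * (WT / LT)) powr r" using RH(2) r1 by (intro powr_mono2) auto
  finally have "AT \<le> LT * (CR * (WT / LT)) powr r" using LTp by (simp add: pos_divide_le_eq mult.commute)
  then have "W0 powr r \<le> L0 powr (r - 1) * (LT * (CR * (WT / LT)) powr r)"
    using W0r L0p by (meson mult_left_mono order.trans powr_ge_zero)
  then have "(W0 powr r) powr (1 / r) \<le> (L0 powr (r - 1) * (LT * (CR * (WT / LT)) powr r)) powr (1 / r)"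
    using r1 by (intro powr_mono2) auto
  also have "(W0 powr r) powr (1 / r) = W0" using W0p r1 by (simp add: powr_powr)
  also have "(L0 powr (r - 1) * (LT * (CR * (WT / LT)) powr r)) powr (1 / r)
      = (L0 powr (r - 1) * LT) powr (1 / r) * (CR * (WT / LT))"
    using L0p LTp CRpos WTp r1 by (simp add: powr_mult powr_powr mult.assoc)
  finally show ?thesis by (simp add: W0_def WT_def L0_def LT_def)
qed

end


context wctx begin

lemma V0_bound:
  assumes l: "l > 0"
  shows "wmeas v (cube a l) \<le> C1 * (l ^ DIM('a)) powr (1 - s) * wmeas w (cube a l) powr s"
proof -
  define V where "V = wmeas v (cube a l)"
  define W where "W = wmeas w (cube a l)"
  define L where "L = l ^ DIM('a)"
  have Lp: "L > 0" using l by (simp add: L_def)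
  have Vp: "V > 0" using weight_int(2)[OF vweight l] by (simp add: V_def)
  have Wp: "W > 0" using weight_int(2)[OF weight l] by (simp add: W_def)
  define t where "t = (V / (C1 * L)) powr (1 / s)"
  have tW: "t * L \<le> W" using wint_low[OF l, of a] by (simp add: t_def V_def L_def W_def)
  have t0: "t \<ge> 0" by (simp add: t_def)
  have ts: "t powr s = V / (C1 * L)" using Vp Lp C1pos s1 by (simp add: t_def powr_powr)
  have "t \<le> W / L" using tW Lp by (simp add: pos_le_divide_eq)
  then have "t powr s \<le> (W / L) powr s" using t0 s1 by (intro powr_mono2) auto
  then have "V / (C1 * L) \<le> W powr s / L powr s" using ts Wp Lp by (simp add: powr_divide)
  then have "V \<le> C1 * L * (W powr s / L powr s)" using C1pos Lp by (simp add: pos_divide_le_eq mult.commute)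
  also have "C1 * L * (W powr s / L powr s) = C1 * L powr (1 - s) * W powr s"
  proof -
    have e: "L / L powr s = L powr (1 - s)"
      using Lp by (simp add: powr_diff)
    have "C1 * L * (W powr s / L powr s) = C1 * (L / L powr s) * W powr s" by (simp add: field_simps)
    then show ?thesis unfolding e .
  qed
  finally show ?thesis by (simp add: V_def W_def L_def)
qed

end

context rhctx begin

definition "Dd = C1 powr (1 / s) * 3 ^ DIM('a)"

lemma geo_cube:
  fixes k :: real
  assumes k: "0 < k" "k < 1" and ex: "s - 1 - (1 - 1 / r) * (s * (1 - k)) \<le> 0"
    and l0: "l0 > 0" and lm: "l0 \<le> m" and x0: "x \<in> cube a0 l0" and xb: "x \<in> cube b m"
  shows "wmeas v (cube a0 l0) * wmeas w (cube b m) powr (k * s)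
     \<le> C1 * (CR * Dd) powr (s * (1 - k)) * wmeas v (cube b m) * wmeas w (cube a0 l0) powr (k * s)"
proof -
  have m: "m > 0" using l0 lm by simp
  have m3: "3 * m > 0" using m by simp
  define T where "T = cube (b - m *\<^sub>R One) (3 * m)"
  have Q0T: "cube a0 l0 \<subseteq> T" unfolding T_def by (rule cube_tri[OF xb x0 lm])
  have QT: "cube b m \<subseteq> T" unfolding T_def using m by (intro cube_mono_sub) simp
  define W0 where "W0 = wmeas w (cube a0 l0)"
  define V0 where "V0 = wmeas v (cube a0 l0)"
  define W where "W = wmeas w (cube b m)"
  define V where "V = wmeas v (cube b m)"
  define WT where "WT = wmeas w T"
  define L0 where "L0 = l0 ^ DIM('a)"
  define L where "L = m ^ DIM('a)"
  define LT where "LT = (3 * m) ^ DIM('a)"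
  have pos: "L0 > 0" "W0 > 0" "W > 0" "V0 > 0" "V > 0" "WT > 0" "L > 0"
    using weight_int(2)[OF weight l0] weight_int(2)[OF vweight l0] weight_int(2)[OF weight m]
      weight_int(2)[OF vweight m] weight_int(2)[OF weight m3] l0 m
    by (auto simp: W0_def V0_def W_def V_def WT_def T_def L0_def L_def)
  have LL: "L0 \<le> L" using l0 lm by (simp add: L0_def L_def power_mono)
  have LTL: "LT \<ge> L" using m by (simp add: LT_def L_def power_mono)
  have RHb: "W0 \<le> (L0 powr (r - 1) * LT) powr (1 / r) * (CR * WT / LT)"
    using RH_bound[OF l0 m3 Q0T[unfolded T_def]] by (simp add: W0_def L0_def LT_def WT_def T_def)
  have dbl: "WT * L \<le> C1 powr (1 / s) * LT * W"
    using doubling[OF m m3 QT[unfolded T_def]] by (simp add: WT_def T_def L_def LT_def W_def)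
  have dbl2: "WT \<le> Dd * W"
  proof -
    have "LT = 3 ^ DIM('a) * L" by (simp add: LT_def L_def power_mult_distrib)
    then have "WT * L \<le> (Dd * W) * L" using dbl by (simp add: Dd_def algebra_simps)
    then show ?thesis using pos by simp
  qed
  have h3: "W0 / W \<le> (CR * Dd) * (L / L0) powr (- (1 - 1 / r))"
    by (rule rh_alg[OF pos(1) pos(7) pos(3) CRpos _ LTL r1 RHb dbl2]) (use pos in simp)
  have h1: "V0 \<le> C1 * L0 powr (1 - s) * W0 powr s"
    using V0_bound[OF l0, of a0] by (simp add: V0_def L0_def W0_def)
  have h2: "W powr s \<le> L powr (s - 1) * V"
    using jensen_cube[OF m, of b] by (simp add: W_def L_def V_def)
  have Ep: "CR * Dd > 0" using CRpos C1pos by (simp add: Dd_def)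
  have "V0 * W powr (k * s) \<le> C1 * (CR * Dd) powr (s * (1 - k)) * V * W0 powr (k * s)"
    by (rule geo_alg[OF pos(1,2,3,4,5) C1pos Ep LL s1 k _ ex h1 h2 h3]) (use r1 in simp)
  then show ?thesis by (simp add: V0_def W_def V_def W0_def)
qed

end


context rhctx begin

lemma far_avg:
  fixes f :: "'a \<Rightarrow> real" and k q Nr :: real
  assumes f[measurable]: "f \<in> borel_measurable lebesgue" and q: "q > 1" and Nr: "Nr \<ge> 0"
    and k: "0 < k" "k < 1" and ex: "s - 1 - (1 - 1 / r) * (s * (1 - k)) \<le> 0"
    and HN: "\<And>a l. l > 0 \<Longrightarrow> (\<integral>\<^sup>+ x. ennreal (\<bar>f x\<bar> powr q) * ennreal (v x) * indicator (cube a l) x \<partial>lebesgue)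
              \<le> ennreal (Nr powr q * wmeas w (cube a l) powr (k * s))"
    and l0: "l0 > 0" and lm: "l0 \<le> m" and x0: "x \<in> cube a0 l0" and xb: "x \<in> cube b m"
  shows "avgI w f (cube b m) / ennreal (wmeas w (cube b m))
     \<le> ennreal ((C1 * (C1 * (CR * Dd) powr (s * (1 - k))) * Nr powr q * wmeas w (cube a0 l0) powr (k * s)
                 / wmeas v (cube a0 l0)) powr (1 / q))"
proof -
  have m: "m > 0" using l0 lm by simp
  define Q where "Q = cube b m"
  define W where "W = wmeas w Q"
  define V where "V = wmeas v Q"
  define W0 where "W0 = wmeas w (cube a0 l0)"
  define V0 where "V0 = wmeas v (cube a0 l0)"
  define Kg where "Kg = C1 * (CR * Dd) powr (s * (1 - k))"
  define B where "B = C1 * Kg * Nr powr q * W0 powr (k * s) / V0"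
  have Wp: "W > 0" using weight_int(2)[OF weight m] by (simp add: W_def Q_def)
  have Vp: "V > 0" using weight_int(2)[OF vweight m] by (simp add: V_def Q_def)
  have W0p: "W0 > 0" using weight_int(2)[OF weight l0] by (simp add: W0_def)
  have V0p: "V0 > 0" using weight_int(2)[OF vweight l0] by (simp add: V0_def)
  have Kgp: "Kg > 0" using C1pos CRpos by (simp add: Kg_def Dd_def)
  have J: "enn_powr (avgI w f Q) q \<le> ennreal (W powr (q - 1)) * (\<integral>\<^sup>+ x. ennreal (\<bar>f x\<bar> powr q * w x) * indicator Q x \<partial>lebesgue)"
    unfolding avgI_def using q aepos Wp weight_int(1)[OF weight m, of b]
    by (intro jensen_enn[of q "\<lambda>x. \<bar>f x\<bar>" w Q W]) (auto elim!: eventually_mono simp: W_def Q_def)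
  have step_b: "(\<integral>\<^sup>+ x. ennreal (\<bar>f x\<bar> powr q * w x) * indicator Q x \<partial>lebesgue)
      \<le> ennreal (C1 * W / V) * (\<integral>\<^sup>+ x. ennreal (\<bar>f x\<bar> powr q) * ennreal (v x) * indicator Q x \<partial>lebesgue)"
  proof -
    have "(\<integral>\<^sup>+ x. ennreal (\<bar>f x\<bar> powr q * w x) * indicator Q x \<partial>lebesgue)
       \<le> (\<integral>\<^sup>+ x. ennreal (C1 * W / V) * (ennreal (\<bar>f x\<bar> powr q) * ennreal (v x) * indicator Q x) \<partial>lebesgue)"
    proof (rule nn_integral_mono_AE)
      show "AE x in lebesgue. ennreal (\<bar>f x\<bar> powr q * w x) * indicator Q x
          \<le> ennreal (C1 * W / V) * (ennreal (\<bar>f x\<bar> powr q) * ennreal (v x) * indicator Q x)"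
        using hlow[OF m, of b] aepos
      proof eventually_elim
        case (elim y)
        show ?case
        proof (cases "y \<in> Q")
          case True
          have h: "V / W \<le> C1 * w y powr (s - 1)" using elim True by (simp add: V_def W_def Q_def)
          have "w y * (V / W) \<le> w y * (C1 * w y powr (s - 1))" using h elim by (intro mult_left_mono) auto
          also have "\<dots> = C1 * v y" using vw_rel[of y] elim by (simp add: algebra_simps)
          finally have "w y * (V / W) \<le> C1 * v y" .
          then have wle: "w y \<le> C1 * W / V * v y" using Wp Vp by (simp add: field_simps)
          have "\<bar>f y\<bar> powr q * w y \<le> \<bar>f y\<bar> powr q * (C1 * W / V * v y)"
            using wle by (intro mult_left_mono) auto
          then have "ennreal (\<bar>f y\<bar> powr q * w y) \<le> ennreal (C1 * W / V * (\<bar>f y\<bar> powr q * v y))"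
            by (intro ennreal_leI) (simp add: algebra_simps)
          also have "\<dots> = ennreal (C1 * W / V) * (ennreal (\<bar>f y\<bar> powr q) * ennreal (v y))"
          proof -
            have e: "ennreal (C1 * W / V) * ennreal (\<bar>f y\<bar> powr q) * ennreal (v y) = ennreal (C1 * W / V * (\<bar>f y\<bar> powr q) * v y)"
              by (rule ennreal3) (use C1pos Wp Vp in auto)
            then show ?thesis by (metis mult.assoc)
          qed
          finally show ?thesis using True by simp
        qed simp
      qed
    qed
    also have "\<dots> = ennreal (C1 * W / V) * (\<integral>\<^sup>+ x. ennreal (\<bar>f x\<bar> powr q) * ennreal (v x) * indicator Q x \<partial>lebesgue)"
      by (rule nn_integral_cmult) (unfold Q_def, measurable)
    finally show ?thesis .
  qed
  have step_c: "(\<integral>\<^sup>+ x. ennreal (\<bar>f x\<bar> powr q) * ennreal (v x) * indicator Q x \<partial>lebesgue)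
      \<le> ennreal (Nr powr q * W powr (k * s))" unfolding Q_def W_def by (rule HN[OF m])
  define Z where "Z = W powr (q - 1) * ((C1 * W / V) * (Nr powr q * W powr (k * s)))"
  have "enn_powr (avgI w f Q) q \<le> ennreal (W powr (q - 1)) * (ennreal (C1 * W / V) * ennreal (Nr powr q * W powr (k * s)))"
    using J step_b step_c by (meson mult_left_mono order.trans zero_le)
  also have "\<dots> = ennreal Z"
  proof -
    have e: "ennreal (W powr (q - 1)) * ennreal (C1 * W / V) * ennreal (Nr powr q * W powr (k * s))
        = ennreal (W powr (q - 1) * (C1 * W / V) * (Nr powr q * W powr (k * s)))"
      by (rule ennreal3) (use C1pos Wp Vp in auto)
    then show ?thesis unfolding Z_def by (metis mult.assoc)
  qed
  finally have AZ: "enn_powr (avgI w f Q) q \<le> ennreal Z" .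
  then have "avgI w f Q \<noteq> top" by (auto simp: enn_powr_def top_unique)
  then obtain A where A: "avgI w f Q = ennreal A" "A \<ge> 0" by (cases "avgI w f Q") auto
  have Z0: "Z \<ge> 0" using C1pos Wp Vp by (simp add: Z_def)
  have AqZ: "A powr q \<le> Z" using AZ A Z0 by (simp add: enn_powr_def ennreal_le_iff)
  have geo: "V0 * W powr (k * s) \<le> Kg * V * W0 powr (k * s)"
    using geo_cube[OF k ex l0 lm x0 xb] by (simp add: V0_def W_def Kg_def V_def W0_def Q_def)
  have geo2: "W powr (k * s) / V \<le> Kg * W0 powr (k * s) / V0"
    using geo Vp V0p by (simp add: field_simps)
  have "Z = C1 * Nr powr q * (W powr (q - 1) * W) * (W powr (k * s) / V)"
    by (simp add: Z_def field_simps)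
  also have "W powr (q - 1) * W = W powr q" using Wp powr_add[of W "q - 1" 1] by simp
  also have "C1 * Nr powr q * W powr q * (W powr (k * s) / V) \<le> C1 * Nr powr q * W powr q * (Kg * W0 powr (k * s) / V0)"
    using geo2 C1pos by (intro mult_left_mono) auto
  also have "\<dots> = W powr q * B" by (simp add: B_def field_simps)
  finally have ZB: "Z \<le> W powr q * B" .
  have "(A / W) powr q = A powr q / W powr q" using A Wp by (simp add: powr_divide)
  also have "\<dots> \<le> B" using AqZ ZB Wp by (simp add: divide_le_eq mult.commute)
  finally have AWB: "(A / W) powr q \<le> B" .
  have "A / W = ((A / W) powr q) powr (1 / q)" using A Wp q by (simp add: powr_powr)
  also have "\<dots> \<le> B powr (1 / q)" using AWB q by (intro powr_mono2) auto
  finally have "A / W \<le> B powr (1 / q)" .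
  then have "avgI w f Q / ennreal W \<le> ennreal (B powr (1 / q))"
    using A Wp by (simp add: divide_ennreal ennreal_leI)
  then show ?thesis by (simp add: Q_def W_def B_def Kg_def W0_def V0_def)
qed

end


context rhctx begin

lemma point_bound:
  fixes f :: "'a \<Rightarrow> real" and k q Nr :: real
  assumes f[measurable]: "f \<in> borel_measurable lebesgue" and q: "q > 1" and Nr: "Nr \<ge> 0"
    and k: "0 < k" "k < 1" and ex: "s - 1 - (1 - 1 / r) * (s * (1 - k)) \<le> 0"
    and HN: "\<And>a l. l > 0 \<Longrightarrow> (\<integral>\<^sup>+ x. ennreal (\<bar>f x\<bar> powr q) * ennreal (v x) * indicator (cube a l) x \<partial>lebesgue)
              \<le> ennreal (Nr powr q * wmeas w (cube a l) powr (k * s))"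
    and l0: "l0 > 0" and x0: "x \<in> cube a0 l0"
  shows "Mw w f x \<le> Mw w (\<lambda>y. f y * indicator (cube (a0 - l0 *\<^sub>R One) (3 * l0)) y) x
     + ennreal ((C1 * (C1 * (CR * Dd) powr (s * (1 - k))) * Nr powr q * wmeas w (cube a0 l0) powr (k * s)
                 / wmeas v (cube a0 l0)) powr (1 / q))"
    (is "_ \<le> Mw w ?f1 x + ennreal ?K")
proof (rule Mw_le)
  fix b m assume m: "m > 0" and xb: "x \<in> cube b m"
  show "avgI w f (cube b m) / ennreal (wmeas w (cube b m)) \<le> Mw w ?f1 x + ennreal ?K"
  proof (cases "m \<le> l0")
    case True
    have sub: "cube b m \<subseteq> cube (a0 - l0 *\<^sub>R One) (3 * l0)" by (rule cube_tri[OF x0 xb True])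
    have "avgI w f (cube b m) = avgI w ?f1 (cube b m)"
      unfolding avgI_def using sub by (intro nn_integral_cong) (auto simp: indicator_def)
    then have "avgI w f (cube b m) / ennreal (wmeas w (cube b m)) \<le> Mw w ?f1 x"
      using Mw_ge[OF m xb, of w ?f1] by simp
    then show ?thesis by (simp add: add_increasing2)
  next
    case False
    then have "l0 \<le> m" by simp
    then have "avgI w f (cube b m) / ennreal (wmeas w (cube b m)) \<le> ennreal ?K"
      using far_avg[OF f q Nr k ex HN l0 _ x0 xb] by blast
    then show ?thesis by (simp add: add_increasing)
  qed
qed

end


context rhctx begin

definition "KK k = C1 * (C1 * (CR * Dd) powr (s * (1 - k)))"
definition "Cq k q = 2 powr q * ((2 powr q * K0 * q / (q - 1)) * Dd powr (k * s) + KK k)"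

lemma Ddpos: "Dd > 0" using C1pos by (simp add: Dd_def)
lemma KKpos: "KK k > 0" using C1pos CRpos Ddpos by (simp add: KK_def)
lemma Cqpos: "q > 1 \<Longrightarrow> Cq k q > 0"
  using K0pos Ddpos KKpos[of k] by (simp add: Cq_def add_pos_pos)

lemma local_morrey:
  fixes f :: "'a \<Rightarrow> real" and k q Nr :: real
  assumes f[measurable]: "f \<in> borel_measurable lebesgue" and q: "q > 1" and Nr: "Nr \<ge> 0"
    and k: "0 < k" "k < 1" and ex: "s - 1 - (1 - 1 / r) * (s * (1 - k)) \<le> 0"
    and HN: "\<And>a l. l > 0 \<Longrightarrow> (\<integral>\<^sup>+ x. ennreal (\<bar>f x\<bar> powr q) * ennreal (v x) * indicator (cube a l) x \<partial>lebesgue)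
              \<le> ennreal (Nr powr q * wmeas w (cube a l) powr (k * s))"
    and l0: "l0 > 0"
  shows "(\<integral>\<^sup>+ x. enn_powr (Mw w f x) q * ennreal (v x) * indicator (cube a0 l0) x \<partial>lebesgue)
     \<le> ennreal (Cq k q * Nr powr q * wmeas w (cube a0 l0) powr (k * s))"
proof -
  define T0 where "T0 = cube (a0 - l0 *\<^sub>R One) (3 * l0)"
  define f1 where "f1 = (\<lambda>y. f y * indicator T0 y)"
  define W0 where "W0 = wmeas w (cube a0 l0)"
  define V0 where "V0 = wmeas v (cube a0 l0)"
  define K where "K = (KK k * Nr powr q * W0 powr (k * s) / V0) powr (1 / q)"
  define KS where "KS = 2 powr q * K0 * q / (q - 1)"
  have f1m[measurable]: "f1 \<in> borel_measurable lebesgue" unfolding f1_def T0_def by measurable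
  have l3: "3 * l0 > 0" using l0 by simp
  have W0p: "W0 > 0" using weight_int(2)[OF weight l0] by (simp add: W0_def)
  have V0p: "V0 > 0" using weight_int(2)[OF vweight l0] by (simp add: V0_def)
  have K0': "K \<ge> 0" by (simp add: K_def)
  have KSp: "KS > 0" using K0pos q by (simp add: KS_def)
  have pb: "Mw w f x \<le> Mw w f1 x + ennreal K" if "x \<in> cube a0 l0" for x
    using point_bound[OF f q Nr k ex HN l0 that] by (simp add: f1_def T0_def K_def KK_def W0_def V0_def)
  have "(\<integral>\<^sup>+ x. enn_powr (Mw w f x) q * ennreal (v x) * indicator (cube a0 l0) x \<partial>lebesgue)
      \<le> (\<integral>\<^sup>+ x. ennreal (2 powr q) * (enn_powr (Mw w f1 x) q * ennreal (v x))
            + ennreal (2 powr q) * ennreal (K powr q) * (ennreal (v x) * indicator (cube a0 l0) x) \<partial>lebesgue)"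
  proof (rule nn_integral_mono)
    fix x
    show "enn_powr (Mw w f x) q * ennreal (v x) * indicator (cube a0 l0) x
      \<le> ennreal (2 powr q) * (enn_powr (Mw w f1 x) q * ennreal (v x))
            + ennreal (2 powr q) * ennreal (K powr q) * (ennreal (v x) * indicator (cube a0 l0) x)"
    proof (cases "x \<in> cube a0 l0")
      case True
      have "enn_powr (Mw w f x) q \<le> enn_powr (Mw w f1 x + ennreal K) q"
        using pb[OF True] q by (intro enn_powr_mono) auto
      also have "\<dots> \<le> ennreal (2 powr q) * (enn_powr (Mw w f1 x) q + enn_powr (ennreal K) q)"
        using q by (intro enn_powr_add_le) auto
      also have "enn_powr (ennreal K) q = ennreal (K powr q)" using K0' by (simp add: enn_powr_ennreal)
      finally have "enn_powr (Mw w f x) q * ennreal (v x)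
          \<le> ennreal (2 powr q) * (enn_powr (Mw w f1 x) q + ennreal (K powr q)) * ennreal (v x)"
        by (intro mult_right_mono) auto
      then show ?thesis using True by (simp add: algebra_simps)
    qed simp
  qed
  also have "\<dots> = ennreal (2 powr q) * (\<integral>\<^sup>+ x. enn_powr (Mw w f1 x) q * ennreal (v x) \<partial>lebesgue)
       + ennreal (2 powr q) * ennreal (K powr q) * ennreal V0"
  proof -
    have m1: "(\<lambda>x. enn_powr (Mw w f1 x) q * ennreal (v x)) \<in> borel_measurable lebesgue"
      unfolding enn_powr_def by measurable
    show ?thesis
      using m1 weight_int(1)[OF vweight l0, of a0]
      by (subst nn_integral_add) (auto simp: nn_integral_cmult V0_def)
  qed
  also have "(\<integral>\<^sup>+ x. enn_powr (Mw w f1 x) q * ennreal (v x) \<partial>lebesgue)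
      \<le> ennreal KS * (\<integral>\<^sup>+ x. ennreal (\<bar>f1 x\<bar> powr q * v x) \<partial>lebesgue)"
    unfolding KS_def by (rule strong_type[OF f1m q])
  also have "(\<integral>\<^sup>+ x. ennreal (\<bar>f1 x\<bar> powr q * v x) \<partial>lebesgue)
      = (\<integral>\<^sup>+ x. ennreal (\<bar>f x\<bar> powr q) * ennreal (v x) * indicator T0 x \<partial>lebesgue)"
    by (intro nn_integral_cong) (auto simp: f1_def indicator_def ennreal_mult)
  also have "\<dots> \<le> ennreal (Nr powr q * wmeas w T0 powr (k * s))"
    unfolding T0_def by (rule HN[OF l3])
  also have "wmeas w T0 \<le> Dd * W0"
  proof -
    have "wmeas w T0 * l0 ^ DIM('a) \<le> C1 powr (1 / s) * (3 * l0) ^ DIM('a) * W0"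
      unfolding T0_def W0_def using l0 by (intro doubling[OF l0 l3] cube_mono_sub) simp
    then have "wmeas w T0 * l0 ^ DIM('a) \<le> (Dd * W0) * l0 ^ DIM('a)"
      by (simp add: Dd_def power_mult_distrib algebra_simps)
    then show ?thesis using l0 by simp
  qed
  then have "ennreal (Nr powr q * wmeas w T0 powr (k * s)) \<le> ennreal (Nr powr q * (Dd * W0) powr (k * s))"
    using k s1 weight_int(2)[OF weight l3, of "a0 - l0 *\<^sub>R One"] unfolding T0_def
    by (intro ennreal_leI mult_left_mono powr_mono2) auto
  finally have "(\<integral>\<^sup>+ x. enn_powr (Mw w f x) q * ennreal (v x) * indicator (cube a0 l0) x \<partial>lebesgue)
     \<le> ennreal (2 powr q) * (ennreal KS * ennreal (Nr powr q * (Dd * W0) powr (k * s)))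
       + ennreal (2 powr q) * ennreal (K powr q) * ennreal V0"
    by (simp add: add_right_mono mult_left_mono)
  also have "\<dots> = ennreal (2 powr q * (KS * (Nr powr q * (Dd * W0) powr (k * s))) + 2 powr q * K powr q * V0)"
  proof -
    have n1: "0 \<le> KS * (Nr powr q * (Dd * W0) powr (k * s))" using KSp by simp
    have n2: "0 \<le> 2 powr q * K powr q * V0" using V0p by simp
    have e1: "ennreal KS * ennreal (Nr powr q * (Dd * W0) powr (k * s)) = ennreal (KS * (Nr powr q * (Dd * W0) powr (k * s)))"
      using KSp by (intro ennreal_mult[symmetric]) auto
    have e2: "ennreal (2 powr q) * ennreal (KS * (Nr powr q * (Dd * W0) powr (k * s))) = ennreal (2 powr q * (KS * (Nr powr q * (Dd * W0) powr (k * s))))"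
      using n1 by (intro ennreal_mult[symmetric]) auto
    have e3: "ennreal (2 powr q) * ennreal (K powr q) * ennreal V0 = ennreal (2 powr q * K powr q * V0)"
      using V0p by (intro ennreal3) auto
    have e4: "ennreal (2 powr q * (KS * (Nr powr q * (Dd * W0) powr (k * s)))) + ennreal (2 powr q * K powr q * V0)
        = ennreal (2 powr q * (KS * (Nr powr q * (Dd * W0) powr (k * s))) + 2 powr q * K powr q * V0)"
      using n1 n2 by (intro ennreal_plus[symmetric]) auto
    show ?thesis unfolding e1 e2 e3 e4 ..
  qed
  also have "2 powr q * (KS * (Nr powr q * (Dd * W0) powr (k * s))) + 2 powr q * K powr q * V0
      = Cq k q * Nr powr q * W0 powr (k * s)"
  proof -
    have Kq: "K powr q = KK k * Nr powr q * W0 powr (k * s) / V0"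
      using q KKpos[of k] V0p W0p Nr by (simp add: K_def powr_powr)
    have DW: "(Dd * W0) powr (k * s) = Dd powr (k * s) * W0 powr (k * s)"
      using Ddpos W0p by (simp add: powr_mult)
    show ?thesis unfolding Kq DW Cq_def KS_def using V0p by (simp add: field_simps)
  qed
  finally show ?thesis by (simp add: W0_def)
qed

end


theorem lemma3p5:
  fixes w :: "'a::euclidean_space \<Rightarrow> real"
    and \<alpha> p q \<kappa> :: real
  defines "n \<equiv> real DIM('a)"
  assumes "0 < \<alpha>" and "\<alpha> < n"
    and "1 < p" and "p < n / \<alpha>"
    and "1 / q = 1 / p - \<alpha> / n"
    and "0 < \<kappa>" and "\<kappa> < p / q"
    and "is_weight w"
    and "A1 (\<lambda>x. w x powr (q / p))"
    and "r_w w > ereal ((1 - \<kappa>) / (p / q - \<kappa>))"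
  shows "\<exists>C::real. \<forall>f \<in> borel_measurable lebesgue.
    morrey_norm q (\<kappa> * q / p) (\<lambda>x. w x powr (q / p)) w (Mw w f)
      \<le> ennreal C * morrey_norm q (\<kappa> * q / p) (\<lambda>x. w x powr (q / p)) w (\<lambda>x. ennreal \<bar>f x\<bar>)"
proof -
  note hyps = assms(2-)
  have np: "n > 0" by (simp add: n_def)
  have p1: "p > 1" using hyps(3) .
  have an: "\<alpha> / n > 0" using hyps(1) np by simp
  have pan: "p * \<alpha> < n" using hyps(4) hyps(1) by (simp add: pos_less_divide_eq mult.commute)
  have an2: "\<alpha> / n < 1 / p" using pan np p1 by (simp add: field_simps)
  have iq: "1 / q > 0" using hyps(5) an2 by simp
  have qpos: "q > 0" using iq by (simp add: zero_less_divide_iff)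
  have "1 / q < 1 / p" using hyps(5) an by simp
  then have qp: "q > p" using qpos p1 by (simp add: field_simps)
  have q1: "q > 1" using qp p1 by simp
  have s1: "q / p > 1" using qp p1 by simp
  have pq1: "p / q < 1" using qp p1 by simp
  have k1: "\<kappa> < 1" using hyps(7) pq1 by linarith
  obtain C1 where vw: "is_weight (\<lambda>x. w x powr (q / p))"
    and A1v: "\<And>Q. is_cube Q \<Longrightarrow> AE x in lebesgue. x \<in> Q \<longrightarrow>
        wmeas (\<lambda>x. w x powr (q / p)) Q / measure lebesgue Q \<le> C1 * w x powr (q / p)"
    using hyps(9) unfolding A1_def by blast
  define \<theta> where "\<theta> = (1 - \<kappa>) / (p / q - \<kappa>)"
  from hyps(10) obtain y where y: "y \<in> ereal ` {r. r > 1 \<and> RH r w}" "ereal \<theta> < y"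
    unfolding r_w_def \<theta>_def less_Sup_iff by blast
  then obtain r where r: "r > 1" "RH r w" "\<theta> < r" by auto
  obtain C0 where C0: "\<And>Q. is_cube Q \<Longrightarrow> set_integrable lebesgue Q (\<lambda>x. w x powr r) \<and>
     ((LINT x:Q|lebesgue. w x powr r) / measure lebesgue Q) powr (1 / r)
        \<le> C0 * (wmeas w Q / measure lebesgue Q)"
    using r(2) unfolding RH_def by blast
  define CR where "CR = max C0 1"
  have RHw: "set_integrable lebesgue Q (\<lambda>x. w x powr r) \<and>
     ((LINT x:Q|lebesgue. w x powr r) / measure lebesgue Q) powr (1 / r)
        \<le> CR * (wmeas w Q / measure lebesgue Q)" if Q: "is_cube Q" for Q
  proof -
    obtain a l where al: "l > 0" "Q = cube a l" using Q by (auto simp: is_cube_iff)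
    have "wmeas w Q / measure lebesgue Q \<ge> 0"
      using weight_int(2)[OF hyps(8) al(1), of a] al by (simp add: measure_cube)
    then have "C0 * (wmeas w Q / measure lebesgue Q) \<le> CR * (wmeas w Q / measure lebesgue Q)"
      by (intro mult_right_mono) (auto simp: CR_def)
    then show ?thesis using C0[OF Q] by auto
  qed
  interpret R: rhctx w "q / p" C1 r CR
    by unfold_locales (use hyps(8) s1 vw A1v r(1) RHw in \<open>auto simp: CR_def\<close>)
  have ex: "q / p - 1 - (1 - 1 / r) * (q / p * (1 - \<kappa>)) \<le> 0"
  proof -
    have a0: "p / q - \<kappa> > 0" using hyps(7) by simp
    have a1: "p / q < 1" using qp p1 by simp
    have k0: "1 - \<kappa> > 0" using k1 by simp
    have "1 / r < 1 / \<theta>" using r(3) r(1) a0 k0 by (intro divide_strict_left_mono) (auto simp: \<theta>_def)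
    also have "1 / \<theta> = (p / q - \<kappa>) / (1 - \<kappa>)" by (simp add: \<theta>_def)
    finally have "1 / r < (p / q - \<kappa>) / (1 - \<kappa>)" .
    then have "(1 / r) * (1 - \<kappa>) < p / q - \<kappa>" using k0 by (simp add: pos_less_divide_eq)
    then have "(1 - p / q) < (1 - 1 / r) * (1 - \<kappa>)" by (simp add: algebra_simps)
    then have A: "q / p * (1 - p / q) < q / p * ((1 - 1 / r) * (1 - \<kappa>))"
      using s1 by (intro mult_strict_left_mono) auto
    have B: "q / p * (1 - p / q) = q / p - 1" using qpos p1 by (simp add: field_simps)
    have C: "(1 - 1 / r) * (q / p * (1 - \<kappa>)) = q / p * ((1 - 1 / r) * (1 - \<kappa>))" by (simp only: mult_ac)
    have "q / p - 1 < q / p * ((1 - 1 / r) * (1 - \<kappa>))" using A unfolding B .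
    then have D: "q / p - 1 - q / p * ((1 - 1 / r) * (1 - \<kappa>)) \<le> 0" by linarith
    show ?thesis unfolding C using D .
  qed
  have kq: "\<kappa> * q / p = \<kappa> * (q / p)" by simp
  define C where "C = (R.Cq \<kappa> q) powr (1 / q)"
  have Cqp: "R.Cq \<kappa> q > 0" using R.Cqpos[OF q1] .
  have Cp: "C > 0" using Cqp by (simp add: C_def)
  show ?thesis
  proof (intro exI[of _ C] ballI)
    fix f :: "'a \<Rightarrow> real" assume fm: "f \<in> borel_measurable lebesgue"
    define N where "N = morrey_norm q (\<kappa> * q / p) (\<lambda>x. w x powr (q / p)) w (\<lambda>x. ennreal \<bar>f x\<bar>)"
    show "morrey_norm q (\<kappa> * q / p) (\<lambda>x. w x powr (q / p)) w (Mw w f) \<le> ennreal C * N"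
    proof (cases "N = top")
      case True
      then show ?thesis using Cp by (simp add: ennreal_mult_top)
    next
      case False
      then obtain Nr where Nr: "N = ennreal Nr" "Nr \<ge> 0" by (cases N) auto
      have HN: "(\<integral>\<^sup>+ x. ennreal (\<bar>f x\<bar> powr q) * ennreal (w x powr (q / p)) * indicator (cube a l) x \<partial>lebesgue)
              \<le> ennreal (Nr powr q * wmeas w (cube a l) powr (\<kappa> * (q / p)))" if l: "l > 0" for a l
      proof -
        have "(\<integral>\<^sup>+ x. enn_powr (ennreal \<bar>f x\<bar>) q * ennreal (w x powr (q / p)) * indicator (cube a l) x \<partial>lebesgue)
              \<le> ennreal (Nr powr q * wmeas w (cube a l) powr (\<kappa> * q / p))"
        proof -
          have Neq: "morrey_norm q (\<kappa> * q / p) (\<lambda>x. w x powr (q / p)) w (\<lambda>x. ennreal \<bar>f x\<bar>) = ennreal Nr"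
            using Nr(1) unfolding N_def .
          have cq: "is_cube (cube a l)" using l by (auto simp: is_cube_iff)
          show ?thesis by (rule morrey_unfold[OF Neq qpos cq weight_int(2)[OF hyps(8) l]])
        qed
        then show ?thesis by (simp add: enn_powr_ennreal)
      qed
      have "morrey_norm q (\<kappa> * q / p) (\<lambda>x. w x powr (q / p)) w (Mw w f) \<le> ennreal (C * Nr)"
        unfolding morrey_norm_def
      proof (rule SUP_least)
        fix Q :: "'a set" assume "Q \<in> {Q. is_cube Q}"
        then obtain a0 l0 where al: "l0 > 0" "Q = cube a0 l0" by (auto simp: is_cube_iff)
        define W0 where "W0 = wmeas w Q"
        have W0p: "W0 > 0" using weight_int(2)[OF hyps(8) al(1)] al by (simp add: W0_def)
        define E where "E = W0 powr (\<kappa> * (q / p))"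
        have Ep: "E > 0" using W0p by (simp add: E_def)
        have J: "(\<integral>\<^sup>+ x. enn_powr (Mw w f x) q * ennreal (w x powr (q / p)) * indicator Q x \<partial>lebesgue)
            \<le> ennreal (R.Cq \<kappa> q * Nr powr q * E)"
          unfolding al(2) E_def W0_def al(2)
          by (rule R.local_morrey[OF fm q1 Nr(2) hyps(6) k1 ex HN al(1)])
        have "(\<integral>\<^sup>+ x. enn_powr (Mw w f x) q * ennreal (w x powr (q / p)) * indicator Q x \<partial>lebesgue) / ennreal (wmeas w Q powr (\<kappa> * q / p))
            \<le> ennreal (R.Cq \<kappa> q * Nr powr q * E) / ennreal E"
          unfolding kq E_def[symmetric] W0_def[symmetric] using J by (rule divide_right_mono_ennreal)
        also have "\<dots> = ennreal (R.Cq \<kappa> q * Nr powr q)" using Ep Cqp by (simp add: divide_ennreal)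
        finally have le: "(\<integral>\<^sup>+ x. enn_powr (Mw w f x) q * ennreal (w x powr (q / p)) * indicator Q x \<partial>lebesgue) / ennreal (wmeas w Q powr (\<kappa> * q / p))
            \<le> ennreal (R.Cq \<kappa> q * Nr powr q)" .
        have "enn_powr ((\<integral>\<^sup>+ x. enn_powr (Mw w f x) q * ennreal (w x powr (q / p)) * indicator Q x \<partial>lebesgue) / ennreal (wmeas w Q powr (\<kappa> * q / p))) (1 / q)
            \<le> enn_powr (ennreal (R.Cq \<kappa> q * Nr powr q)) (1 / q)"
          using le qpos by (intro enn_powr_mono) auto
        also have "\<dots> = ennreal ((R.Cq \<kappa> q * Nr powr q) powr (1 / q))"
          using Cqp by (simp add: enn_powr_ennreal)
        also have "(R.Cq \<kappa> q * Nr powr q) powr (1 / q) = C * Nr"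
          using Cqp Nr(2) qpos by (simp add: C_def powr_mult powr_powr)
        finally show "enn_powr ((\<integral>\<^sup>+ x. enn_powr (Mw w f x) q * ennreal (w x powr (q / p)) * indicator Q x \<partial>lebesgue) / ennreal (wmeas w Q powr (\<kappa> * q / p))) (1 / q)
            \<le> ennreal (C * Nr)" .
      qed
      also have "ennreal (C * Nr) = ennreal C * N" using Cp Nr by (simp add: ennreal_mult)
      finally show ?thesis .
    qed
  qed
qed


end
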